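(* Let $H\in(\tfrac12,1)$, let $(L_t)_{t\in\mathbb R}$ be a two-sided Lévy process without Gaussian component with $\mathbb E L_1=0$, $\mathbb E L_1^2<\infty$, and let $X_t=\int_{-\infty}^t f_H(t,s)\,dL_s$ be the fLpMvN. Then for all $-\infty<s<t<\infty$, $$\sum_{j=1}^{2^n}\big(X_{s+\frac{j}{2^n}(t-s)}-X_{s+\frac{j-1}{2^n}(t-s)}\big)^2\to0\quad\text{a.s. as }n\to\infty.$$
   Context: A two-sided Lévy process is $L_t=L^{(1)}_t$ for $t\ge0$ and $L_t=-L^{(2)}_{-(t-)}$ for $t<0$, with $L^{(1)},L^{(2)}$ i.i.d. Lévy processes. Mandelbrot–Van Ness kernel: $f_H(t,s)=C_H\big((t-s)_+^{H-1/2}-(-s)_+^{H-1/2}\big)$ with $C_H=\big(\int_0^\infty((1+s)^{H-1/2}-s^{H-1/2})^2ds+\tfrac1{2H}\big)^{-1/2}$. The integral is the $L^2(\mathbb P)$-limit of integrals of step functions. *)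

theory Defs
  imports "HOL-Probability.Probability"
begin

definition cadlag_nonneg :: "(real \<Rightarrow> real) \<Rightarrow> bool" where
  "cadlag_nonneg g \<longleftrightarrow>
     (\<forall>t\<ge>0. continuous (at_right t) g) \<and> (\<forall>t>0. \<exists>l. (g \<longlongrightarrow> l) (at_left t))"

text \<open>(One-sided) Levy process indexed by t >= 0 (values at t < 0 are irrelevant).\<close>
definition levy_process :: "'a measure \<Rightarrow> (real \<Rightarrow> 'a \<Rightarrow> real) \<Rightarrow> bool" where
  "levy_process M L \<longleftrightarrow>
     prob_space M \<and>
     (\<forall>t\<ge>0. L t \<in> borel_measurable M) \<and>
     (AE \<omega> in M. L 0 \<omega> = 0) \<and>
     (\<forall>(n::nat) (\<tau>::nat \<Rightarrow> real). 0 \<le> \<tau> 0 \<and> (\<forall>i<n. \<tau> i < \<tau> (Suc i)) \<longrightarrow>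
        prob_space.indep_vars M (\<lambda>_. borel) (\<lambda>i \<omega>. L (\<tau> (Suc i)) \<omega> - L (\<tau> i) \<omega>) {..<n}) \<and>
     (\<forall>s h. 0 \<le> s \<and> 0 \<le> h \<longrightarrow>
        distr M borel (\<lambda>\<omega>. L (s + h) \<omega> - L s \<omega>) = distr M borel (\<lambda>\<omega>. L h \<omega> - L 0 \<omega>)) \<and>
     (AE \<omega> in M. cadlag_nonneg (\<lambda>t. L t \<omega>))"

definition path_nonneg :: "(real \<Rightarrow> 'a \<Rightarrow> real) \<Rightarrow> 'a \<Rightarrow> real \<Rightarrow> real" where
  "path_nonneg L \<omega> = restrict (\<lambda>t. L t \<omega>) {0..}"

definition iid_processes :: "'a measure \<Rightarrow> (real \<Rightarrow> 'a \<Rightarrow> real) \<Rightarrow> (real \<Rightarrow> 'a \<Rightarrow> real) \<Rightarrow> bool" where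
  "iid_processes M L1 L2 \<longleftrightarrow>
     prob_space.indep_var M (Pi\<^sub>M {0..} (\<lambda>_. borel)) (path_nonneg L1)
                            (Pi\<^sub>M {0..} (\<lambda>_. borel)) (path_nonneg L2) \<and>
     distr M (Pi\<^sub>M {0..} (\<lambda>_. borel)) (path_nonneg L1) =
     distr M (Pi\<^sub>M {0..} (\<lambda>_. borel)) (path_nonneg L2)"

definition two_sided :: "(real \<Rightarrow> 'a \<Rightarrow> real) \<Rightarrow> (real \<Rightarrow> 'a \<Rightarrow> real) \<Rightarrow> real \<Rightarrow> 'a \<Rightarrow> real" where
  "two_sided L1 L2 t \<omega> = (if 0 \<le> t then L1 t \<omega> else - Lim (at_left (-t)) (\<lambda>u. L2 u \<omega>))"

text \<open>No Gaussian component: the Levy-Khintchine triple of Y (= L_1) has sigma^2 = 0, i.e.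
  the characteristic function of Y is exp(i gamma u + int (e^{iux} - 1 - iux 1_{|x|<=1}) nu(dx))
  for some gamma and a Levy measure nu.\<close>
definition no_gaussian_component :: "'a measure \<Rightarrow> ('a \<Rightarrow> real) \<Rightarrow> bool" where
  "no_gaussian_component M Y \<longleftrightarrow>
     (\<exists>(\<gamma>::real) (\<nu>::real measure).
        sets \<nu> = sets borel \<and> emeasure \<nu> {0} = 0 \<and> integrable \<nu> (\<lambda>x. min 1 (x\<^sup>2)) \<and>
        (\<forall>u. char (distr M borel Y) u =
              exp (\<i> * complex_of_real (\<gamma> * u) +
                   (CLINT x|\<nu>. iexp (u * x) - 1 - \<i> * complex_of_real (u * x * indicator {-1..1} x)))))"

definition C_H :: "real \<Rightarrow> real" where
  "C_H H = ((LINT s|lborel. indicator {0..} s * ((1 + s) powr (H - 1/2) - s powr (H - 1/2))\<^sup>2)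
             + 1 / (2 * H)) powr (-1/2)"

definition f_H :: "real \<Rightarrow> real \<Rightarrow> real \<Rightarrow> real" where
  "f_H H t s = C_H H * (max (t - s) 0 powr (H - 1/2) - max (- s) 0 powr (H - 1/2))"

definition step_fn :: "nat \<Rightarrow> (nat \<Rightarrow> real) \<Rightarrow> (nat \<Rightarrow> real) \<Rightarrow> real \<Rightarrow> real" where
  "step_fn n a s x = (\<Sum>i<n. a i * indicator {s i<..s (Suc i)} x)"

definition step_int :: "(real \<Rightarrow> 'a \<Rightarrow> real) \<Rightarrow> nat \<Rightarrow> (nat \<Rightarrow> real) \<Rightarrow> (nat \<Rightarrow> real) \<Rightarrow> 'a \<Rightarrow> real" where
  "step_int L n a s \<omega> = (\<Sum>i<n. a i * (L (s (Suc i)) \<omega> - L (s i) \<omega>))"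

text \<open>X is (a version of) int f dL: the L^2(P)-limit of integrals of step functions g_k
  with g_k -> f in L^2(R).\<close>
definition levy_integral :: "'a measure \<Rightarrow> (real \<Rightarrow> 'a \<Rightarrow> real) \<Rightarrow> (real \<Rightarrow> real) \<Rightarrow> ('a \<Rightarrow> real) \<Rightarrow> bool" where
  "levy_integral M L f X \<longleftrightarrow>
     X \<in> borel_measurable M \<and>
     (\<exists>(N::nat \<Rightarrow> nat) (A::nat \<Rightarrow> nat \<Rightarrow> real) (S::nat \<Rightarrow> nat \<Rightarrow> real).
        (\<forall>k. \<forall>i<N k. S k i < S k (Suc i)) \<and>
        (\<forall>k. integrable lborel (\<lambda>x. (step_fn (N k) (A k) (S k) x - f x)\<^sup>2)) \<and>
        ((\<lambda>k. LINT x|lborel. (step_fn (N k) (A k) (S k) x - f x)\<^sup>2) \<longlonglongrightarrow> 0) \<and>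
        (\<forall>k. integrable M (\<lambda>\<omega>. (step_int L (N k) (A k) (S k) \<omega> - X \<omega>)\<^sup>2)) \<and>
        ((\<lambda>k. LINT \<omega>|M. (step_int L (N k) (A k) (S k) \<omega> - X \<omega>)\<^sup>2) \<longlonglongrightarrow> 0))"

end

theory Submission
  imports Defs
begin


lemma sq_int_imp_int:
  fixes f :: "'a \<Rightarrow> real"
  assumes "finite_measure M" "f \<in> borel_measurable M" "integrable M (\<lambda>x. (f x)\<^sup>2)"
  shows "integrable M f"
proof -
  interpret finite_measure M by fact
  have i: "integrable M (\<lambda>x. 1 + (f x)\<^sup>2)" using assms(3) by auto
  show ?thesis
  proof (rule Bochner_Integration.integrable_bound[OF i assms(2)])
  show "AE x in M. norm (f x) \<le> norm (1 + (f x)\<^sup>2)"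
  proof (intro AE_I2)
    fix x have "\<bar>f x\<bar> \<le> 1 + (f x)\<^sup>2"
    proof (cases "\<bar>f x\<bar> \<le> 1")
      case True then show ?thesis by (simp add: add_increasing2)
    next
      case False
      then have "\<bar>f x\<bar> * 1 \<le> \<bar>f x\<bar> * \<bar>f x\<bar>" by (intro mult_left_mono) auto
      then show ?thesis by (simp add: power2_eq_square)
    qed
    then show "norm (f x) \<le> norm (1 + (f x)\<^sup>2)" by simp
  qed
  qed
qed

lemma sq_int_mult:
  fixes f g :: "'a \<Rightarrow> real"
  assumes "f \<in> borel_measurable M" "g \<in> borel_measurable M"
    "integrable M (\<lambda>x. (f x)\<^sup>2)" "integrable M (\<lambda>x. (g x)\<^sup>2)"
  shows "integrable M (\<lambda>x. f x * g x)"
proof -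
  have i: "integrable M (\<lambda>x. (f x)\<^sup>2 + (g x)\<^sup>2)" using assms by auto
  have m: "(\<lambda>x. f x * g x) \<in> borel_measurable M" using assms by auto
  show ?thesis
  proof (rule Bochner_Integration.integrable_bound[OF i m])
  show "AE x in M. norm (f x * g x) \<le> norm ((f x)\<^sup>2 + (g x)\<^sup>2)"
  proof (intro AE_I2)
    fix x have "\<bar>f x * g x\<bar> \<le> (f x)\<^sup>2 + (g x)\<^sup>2"
    proof -
      have "0 \<le> (\<bar>f x\<bar> - \<bar>g x\<bar>)\<^sup>2" by simp
      then have "2 * (\<bar>f x\<bar> * \<bar>g x\<bar>) \<le> (f x)\<^sup>2 + (g x)\<^sup>2"
        by (simp add: power2_diff)
      moreover have "0 \<le> \<bar>f x\<bar> * \<bar>g x\<bar>" by simp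
      ultimately have "\<bar>f x\<bar> * \<bar>g x\<bar> \<le> (f x)\<^sup>2 + (g x)\<^sup>2" by linarith
      then show ?thesis by (simp add: abs_mult)
    qed
    then show "norm (f x * g x) \<le> norm ((f x)\<^sup>2 + (g x)\<^sup>2)" by simp
  qed
  qed
qed

lemma sq_int_add:
  fixes f g :: "'a \<Rightarrow> real"
  assumes "f \<in> borel_measurable M" "g \<in> borel_measurable M"
    "integrable M (\<lambda>x. (f x)\<^sup>2)" "integrable M (\<lambda>x. (g x)\<^sup>2)"
  shows "integrable M (\<lambda>x. (f x + g x)\<^sup>2)"
proof -
  have "integrable M (\<lambda>x. (f x)\<^sup>2 + 2 * (f x * g x) + (g x)\<^sup>2)"
    using assms sq_int_mult[OF assms] by auto
  then show ?thesis by (simp add: power2_sum algebra_simps)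
qed

lemma sq_int_diff:
  fixes f g :: "'a \<Rightarrow> real"
  assumes "f \<in> borel_measurable M" "g \<in> borel_measurable M"
    "integrable M (\<lambda>x. (f x)\<^sup>2)" "integrable M (\<lambda>x. (g x)\<^sup>2)"
  shows "integrable M (\<lambda>x. (f x - g x)\<^sup>2)"
  using sq_int_add[of f M "\<lambda>x. - g x"] assms by auto

lemma distr_eq_integral:
  fixes X Y :: "'a \<Rightarrow> real" and g :: "real \<Rightarrow> real"
  assumes "X \<in> borel_measurable M" "Y \<in> borel_measurable M"
    "distr M borel X = distr M borel Y" "g \<in> borel_measurable borel"
  shows "integrable M (\<lambda>\<omega>. g (X \<omega>)) \<longleftrightarrow> integrable M (\<lambda>\<omega>. g (Y \<omega>))"
    and "(\<integral>\<omega>. g (X \<omega>) \<partial>M) = (\<integral>\<omega>. g (Y \<omega>) \<partial>M)"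
proof -
  show "integrable M (\<lambda>\<omega>. g (X \<omega>)) \<longleftrightarrow> integrable M (\<lambda>\<omega>. g (Y \<omega>))"
    using integrable_distr_eq[OF assms(1) assms(4)] integrable_distr_eq[OF assms(2) assms(4)] assms(3)
    by simp
  show "(\<integral>\<omega>. g (X \<omega>) \<partial>M) = (\<integral>\<omega>. g (Y \<omega>) \<partial>M)"
    using integral_distr[OF assms(1) assms(4)] integral_distr[OF assms(2) assms(4)] assms(3)
    by simp
qed

lemma (in prob_space) summand_sq_int:
  fixes X Y :: "'a \<Rightarrow> real"
  assumes ind: "indep_var borel X borel Y" and sq: "integrable M (\<lambda>\<omega>. (X \<omega> + Y \<omega>)\<^sup>2)"
  shows "integrable M (\<lambda>\<omega>. (X \<omega>)\<^sup>2)"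
proof -
  have rvX[measurable]: "X \<in> borel_measurable M" using ind indep_var_rv1 by blast
  have rvY[measurable]: "Y \<in> borel_measurable M" using ind indep_var_rv2 by blast
  define PX where "PX = distr M borel X"
  define PY where "PY = distr M borel Y"
  interpret PX: prob_space PX unfolding PX_def by (rule prob_space_distr) simp
  interpret PY: prob_space PY unfolding PY_def by (rule prob_space_distr) simp
  interpret PXY: pair_sigma_finite PX PY ..
  have joint: "PX \<Otimes>\<^sub>M PY = distr M (borel \<Otimes>\<^sub>M borel) (\<lambda>\<omega>. (X \<omega>, Y \<omega>))"
    using ind indep_var_distribution_eq unfolding PX_def PY_def by blast
  have "(\<integral>\<^sup>+\<omega>. ennreal ((X \<omega> + Y \<omega>)\<^sup>2) \<partial>M) = ennreal (\<integral>\<omega>. (X \<omega> + Y \<omega>)\<^sup>2 \<partial>M)"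
    using sq by (intro nn_integral_eq_integral) auto
  then have fin: "(\<integral>\<^sup>+\<omega>. ennreal ((X \<omega> + Y \<omega>)\<^sup>2) \<partial>M) \<noteq> \<infinity>" by simp
  have "(\<integral>\<^sup>+\<omega>. ennreal ((X \<omega> + Y \<omega>)\<^sup>2) \<partial>M)
      = (\<integral>\<^sup>+p. ennreal ((fst p + snd p)\<^sup>2) \<partial>distr M (borel \<Otimes>\<^sub>M borel) (\<lambda>\<omega>. (X \<omega>, Y \<omega>)))"
    by (subst nn_integral_distr) auto
  also have "\<dots> = (\<integral>\<^sup>+p. ennreal ((fst p + snd p)\<^sup>2) \<partial>(PX \<Otimes>\<^sub>M PY))"
    by (simp add: joint)
  also have "\<dots> = (\<integral>\<^sup>+y. (\<integral>\<^sup>+x. ennreal ((x + y)\<^sup>2) \<partial>PX) \<partial>PY)"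
    by (subst PXY.nn_integral_snd[symmetric]) (auto simp: PX_def PY_def)
  finally have fin2: "(\<integral>\<^sup>+y. (\<integral>\<^sup>+x. ennreal ((x + y)\<^sup>2) \<partial>PX) \<partial>PY) \<noteq> \<infinity>"
    using fin by simp
  have "AE y in PY. (\<integral>\<^sup>+x. ennreal ((x + y)\<^sup>2) \<partial>PX) \<noteq> \<infinity>"
  proof (rule nn_integral_PInf_AE[OF _ fin2])
    have "case_prod (\<lambda>y x. ennreal ((x + y)\<^sup>2)) \<in> borel_measurable (PY \<Otimes>\<^sub>M PX)"
      unfolding PX_def PY_def by measurable
    then show "(\<lambda>y. \<integral>\<^sup>+x. ennreal ((x + y)\<^sup>2) \<partial>PX) \<in> borel_measurable PY"
      by (rule PX.borel_measurable_nn_integral)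
  qed
  then obtain y0 where y0: "(\<integral>\<^sup>+x. ennreal ((x + y0)\<^sup>2) \<partial>PX) \<noteq> \<infinity>"
  proof -
    assume r: "\<And>y0. (\<integral>\<^sup>+x. ennreal ((x + y0)\<^sup>2) \<partial>PX) \<noteq> \<infinity> \<Longrightarrow> thesis"
    assume ae: "AE y in PY. (\<integral>\<^sup>+x. ennreal ((x + y)\<^sup>2) \<partial>PX) \<noteq> \<infinity>"
    show thesis
    proof (rule ccontr)
      assume "\<not> thesis"
      with r have "\<And>y. (\<integral>\<^sup>+x. ennreal ((x + y)\<^sup>2) \<partial>PX) \<noteq> \<infinity> \<Longrightarrow> False" by blast
      then have "AE y in PY. False" using ae by (rule_tac eventually_mono[OF ae]) auto
      then show False using PY.AE_False by simp
    qed
  qed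
  have "(\<integral>\<^sup>+x. ennreal (x\<^sup>2) \<partial>PX) \<le> (\<integral>\<^sup>+x. 2 * ennreal ((x + y0)\<^sup>2) + ennreal (2 * y0\<^sup>2) \<partial>PX)"
  proof (intro nn_integral_mono)
    fix x :: real
    have "x\<^sup>2 \<le> 2 * (x + y0)\<^sup>2 + 2 * y0\<^sup>2"
      using zero_le_power2[of "x + 2 * y0"] by (simp add: power2_eq_square algebra_simps)
    then have "ennreal (x\<^sup>2) \<le> ennreal (2 * (x + y0)\<^sup>2 + 2 * y0\<^sup>2)" by (rule ennreal_leI)
    also have "\<dots> = 2 * ennreal ((x + y0)\<^sup>2) + ennreal (2 * y0\<^sup>2)"
      by (simp add: ennreal_plus ennreal_mult)
    finally show "ennreal (x\<^sup>2) \<le> 2 * ennreal ((x + y0)\<^sup>2) + ennreal (2 * y0\<^sup>2)" .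
  qed
  also have "\<dots> = 2 * (\<integral>\<^sup>+x. ennreal ((x + y0)\<^sup>2) \<partial>PX) + ennreal (2 * y0\<^sup>2)"
  proof -
    have e1: "emeasure (distr M borel X) UNIV = 1" using PX.emeasure_space_1 unfolding PX_def by simp
    show ?thesis by (subst nn_integral_add) (auto simp: nn_integral_cmult PX_def e1)
  qed
  also have "\<dots> < \<infinity>" using y0 by (simp add: less_top ennreal_mult_eq_top_iff ennreal_mult_less_top)
  finally have "(\<integral>\<^sup>+x. ennreal (x\<^sup>2) \<partial>PX) < \<infinity>" .
  then have "(\<integral>\<^sup>+\<omega>. ennreal ((X \<omega>)\<^sup>2) \<partial>M) < \<infinity>"
    unfolding PX_def by (subst (asm) nn_integral_distr) auto
  then show ?thesis by (intro integrableI_bounded) auto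
qed

lemma fatou_sq:
  fixes F :: "nat \<Rightarrow> 'a \<Rightarrow> real" and G :: "'a \<Rightarrow> real" and B :: "nat \<Rightarrow> real"
  assumes [measurable]: "\<And>m. F m \<in> borel_measurable M" "G \<in> borel_measurable M"
    and int: "\<And>m. integrable M (\<lambda>\<omega>. (F m \<omega> - G \<omega>)\<^sup>2)"
    and le: "\<And>m. (\<integral>\<omega>. (F m \<omega> - G \<omega>)\<^sup>2 \<partial>M) \<le> B m"
    and lim: "B \<longlonglongrightarrow> b"
  shows "(\<integral>\<^sup>+\<omega>. liminf (\<lambda>m. ennreal ((F m \<omega> - G \<omega>)\<^sup>2)) \<partial>M) \<le> ennreal b"
proof -
  have "(\<integral>\<^sup>+\<omega>. liminf (\<lambda>m. ennreal ((F m \<omega> - G \<omega>)\<^sup>2)) \<partial>M)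
      \<le> liminf (\<lambda>m. \<integral>\<^sup>+\<omega>. ennreal ((F m \<omega> - G \<omega>)\<^sup>2) \<partial>M)"
    by (rule nn_integral_liminf) auto
  also have "\<dots> = liminf (\<lambda>m. ennreal (\<integral>\<omega>. (F m \<omega> - G \<omega>)\<^sup>2 \<partial>M))"
    using int by (subst nn_integral_eq_integral) auto
  also have "\<dots> \<le> liminf (\<lambda>m. ennreal (B m))"
    using le by (intro Liminf_mono always_eventually allI ennreal_leI)
  also have "\<dots> = ennreal b"
    by (intro lim_imp_Liminf tendsto_ennrealI lim) auto
  finally show ?thesis .
qed

lemma fatou_sq_lim:
  fixes F :: "nat \<Rightarrow> 'a \<Rightarrow> real" and G Finf :: "'a \<Rightarrow> real" and B :: "nat \<Rightarrow> real"
  assumes [measurable]: "\<And>m. F m \<in> borel_measurable M" "G \<in> borel_measurable M" "Finf \<in> borel_measurable M"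
    and int: "\<And>m. integrable M (\<lambda>\<omega>. (F m \<omega> - G \<omega>)\<^sup>2)"
    and le: "\<And>m. (\<integral>\<omega>. (F m \<omega> - G \<omega>)\<^sup>2 \<partial>M) \<le> B m"
    and lim: "B \<longlonglongrightarrow> b"
    and conv: "AE \<omega> in M. (\<lambda>m. F m \<omega>) \<longlonglongrightarrow> Finf \<omega>"
  shows "integrable M (\<lambda>\<omega>. (Finf \<omega> - G \<omega>)\<^sup>2)" "(\<integral>\<omega>. (Finf \<omega> - G \<omega>)\<^sup>2 \<partial>M) \<le> b"
proof -
  have "(\<integral>\<^sup>+\<omega>. ennreal ((Finf \<omega> - G \<omega>)\<^sup>2) \<partial>M) = (\<integral>\<^sup>+\<omega>. liminf (\<lambda>m. ennreal ((F m \<omega> - G \<omega>)\<^sup>2)) \<partial>M)"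
  proof (intro nn_integral_cong_AE eventually_mono[OF conv])
    fix \<omega> assume c: "(\<lambda>m. F m \<omega>) \<longlonglongrightarrow> Finf \<omega>"
    have "(\<lambda>m. ennreal ((F m \<omega> - G \<omega>)\<^sup>2)) \<longlonglongrightarrow> ennreal ((Finf \<omega> - G \<omega>)\<^sup>2)"
      by (intro tendsto_ennrealI tendsto_intros c)
    then show "ennreal ((Finf \<omega> - G \<omega>)\<^sup>2) = liminf (\<lambda>m. ennreal ((F m \<omega> - G \<omega>)\<^sup>2))"
      by (metis lim_imp_Liminf sequentially_bot)
  qed
  also have "\<dots> \<le> ennreal b" by (rule fatou_sq[OF assms(1,2) int le lim])
  finally have nn: "(\<integral>\<^sup>+\<omega>. ennreal ((Finf \<omega> - G \<omega>)\<^sup>2) \<partial>M) \<le> ennreal b" .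
  then show i: "integrable M (\<lambda>\<omega>. (Finf \<omega> - G \<omega>)\<^sup>2)"
    by (intro integrableI_bounded) (auto simp: top_unique intro: le_less_trans)
  have b0: "0 \<le> b"
  proof (rule LIMSEQ_le_const[OF lim], intro exI allI impI)
    fix n have "0 \<le> (\<integral>\<omega>. (F n \<omega> - G \<omega>)\<^sup>2 \<partial>M)" by (rule integral_nonneg_AE) auto
    then show "0 \<le> B n" using le[of n] by linarith
  qed
  have "ennreal (\<integral>\<omega>. (Finf \<omega> - G \<omega>)\<^sup>2 \<partial>M) \<le> ennreal b"
    using nn i by (subst (asm) nn_integral_eq_integral) auto
  then show "(\<integral>\<omega>. (Finf \<omega> - G \<omega>)\<^sup>2 \<partial>M) \<le> b" using b0 by (simp add: ennreal_le_iff)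
qed

lemma (in prob_space) sq_integral_le:
  fixes W :: "'a \<Rightarrow> real"
  assumes [measurable]: "W \<in> borel_measurable M" and i: "integrable M (\<lambda>\<omega>. (W \<omega>)\<^sup>2)"
  shows "(\<integral>\<omega>. W \<omega> \<partial>M)\<^sup>2 \<le> (\<integral>\<omega>. (W \<omega>)\<^sup>2 \<partial>M)"
proof -
  define c where "c = (\<integral>\<omega>. W \<omega> \<partial>M)"
  have iW: "integrable M W" by (rule sq_int_imp_int[OF _ _ i]) (auto intro: finite_measure_axioms)
  have "0 \<le> (\<integral>\<omega>. (W \<omega> - c)\<^sup>2 \<partial>M)" by (rule integral_nonneg_AE) auto
  also have "(\<lambda>\<omega>. (W \<omega> - c)\<^sup>2) = (\<lambda>\<omega>. (W \<omega>)\<^sup>2 - 2 * c * W \<omega> + c\<^sup>2)"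
    by (auto simp: power2_diff)
  also have "(\<integral>\<omega>. (W \<omega>)\<^sup>2 - 2 * c * W \<omega> + c\<^sup>2 \<partial>M) = (\<integral>\<omega>. (W \<omega>)\<^sup>2 \<partial>M) - 2 * c * c + c\<^sup>2"
    using i iW by (simp add: prob_space c_def)
  finally show ?thesis unfolding c_def by (simp add: power2_eq_square)
qed

lemma sq3: "((a::real) + b + c)\<^sup>2 \<le> 3 * (a\<^sup>2 + b\<^sup>2 + c\<^sup>2)"
proof -
  have "0 \<le> (a - b)\<^sup>2 + (b - c)\<^sup>2 + (a - c)\<^sup>2" by simp
  then show ?thesis by (simp add: power2_eq_square algebra_simps)
qed

lemma sq3_int:
  fixes F G K :: "'a \<Rightarrow> real"
  assumes [measurable]: "F \<in> borel_measurable M" "G \<in> borel_measurable M" "K \<in> borel_measurable M"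
    and i: "integrable M (\<lambda>x. (F x)\<^sup>2)" "integrable M (\<lambda>x. (G x)\<^sup>2)" "integrable M (\<lambda>x. (K x)\<^sup>2)"
  shows "integrable M (\<lambda>x. (F x + G x + K x)\<^sup>2)"
    "(\<integral>x. (F x + G x + K x)\<^sup>2 \<partial>M) \<le> 3 * ((\<integral>x. (F x)\<^sup>2 \<partial>M) + (\<integral>x. (G x)\<^sup>2 \<partial>M) + (\<integral>x. (K x)\<^sup>2 \<partial>M))"
proof -
  have ib: "integrable M (\<lambda>x. 3 * ((F x)\<^sup>2 + (G x)\<^sup>2 + (K x)\<^sup>2))" using i by auto
  have m: "(\<lambda>x. (F x + G x + K x)\<^sup>2) \<in> borel_measurable M" by measurable
  show i2: "integrable M (\<lambda>x. (F x + G x + K x)\<^sup>2)"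
  proof (rule Bochner_Integration.integrable_bound[OF ib m], intro AE_I2)
    fix x show "norm ((F x + G x + K x)\<^sup>2) \<le> norm (3 * ((F x)\<^sup>2 + (G x)\<^sup>2 + (K x)\<^sup>2))"
      using sq3[of "F x" "G x" "K x"] by simp
  qed
  have "(\<integral>x. (F x + G x + K x)\<^sup>2 \<partial>M) \<le> (\<integral>x. 3 * ((F x)\<^sup>2 + (G x)\<^sup>2 + (K x)\<^sup>2) \<partial>M)"
    by (rule integral_mono[OF i2 ib]) (rule sq3)
  also have "\<dots> = 3 * ((\<integral>x. (F x)\<^sup>2 \<partial>M) + (\<integral>x. (G x)\<^sup>2 \<partial>M) + (\<integral>x. (K x)\<^sup>2 \<partial>M))"
    using i by simp
  finally show "(\<integral>x. (F x + G x + K x)\<^sup>2 \<partial>M) \<le> 3 * ((\<integral>x. (F x)\<^sup>2 \<partial>M) + (\<integral>x. (G x)\<^sup>2 \<partial>M) + (\<integral>x. (K x)\<^sup>2 \<partial>M))" .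
qed




locale lev =
  fixes M :: "'a measure" and L :: "real \<Rightarrow> 'a \<Rightarrow> real"
  assumes levy: "levy_process M L"
begin

lemma ps: "prob_space M" using levy unfolding levy_process_def by blast

sublocale prob_space M by (rule ps)

lemma meas[measurable]: "0 \<le> t \<Longrightarrow> L t \<in> borel_measurable M"
  using levy unfolding levy_process_def by blast

lemma L0: "AE \<omega> in M. L 0 \<omega> = 0"
  using levy unfolding levy_process_def by blast

lemma cadlag: "AE \<omega> in M. cadlag_nonneg (\<lambda>t. L t \<omega>)"
  using levy unfolding levy_process_def by blast

lemma stat: "0 \<le> s \<Longrightarrow> 0 \<le> h \<Longrightarrow>
   distr M borel (\<lambda>\<omega>. L (s + h) \<omega> - L s \<omega>) = distr M borel (\<lambda>\<omega>. L h \<omega> - L 0 \<omega>)"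
  using levy unfolding levy_process_def by blast

lemma indep2:
  assumes "0 < a" "0 < b"
  shows "indep_var borel (\<lambda>\<omega>. L a \<omega> - L 0 \<omega>) borel (\<lambda>\<omega>. L (a + b) \<omega> - L a \<omega>)"
proof -
  define \<tau> :: "nat \<Rightarrow> real" where "\<tau> i = (if i = 0 then 0 else if i = 1 then a else a + b)" for i
  have "\<forall>(n::nat) (\<tau>::nat \<Rightarrow> real). 0 \<le> \<tau> 0 \<and> (\<forall>i<n. \<tau> i < \<tau> (Suc i)) \<longrightarrow>
        indep_vars (\<lambda>_. borel) (\<lambda>i \<omega>. L (\<tau> (Suc i)) \<omega> - L (\<tau> i) \<omega>) {..<n}"
    using levy unfolding levy_process_def by blast
  from this[rule_format, of \<tau> 2] assms
  have iv: "indep_vars (\<lambda>_. borel) (\<lambda>i \<omega>. L (\<tau> (Suc i)) \<omega> - L (\<tau> i) \<omega>) {..<2}"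
    by (auto simp: \<tau>_def less_Suc_eq numeral_2_eq_2)
  have "indep_var (Pi\<^sub>M {0} (\<lambda>_. borel)) (\<lambda>\<omega>. restrict (\<lambda>i. L (\<tau> (Suc i)) \<omega> - L (\<tau> i) \<omega>) {0})
     (Pi\<^sub>M {1} (\<lambda>_. borel)) (\<lambda>\<omega>. restrict (\<lambda>i. L (\<tau> (Suc i)) \<omega> - L (\<tau> i) \<omega>) {1})"
    by (rule indep_var_restrict[OF iv]) auto
  from indep_var_compose[OF this measurable_component_singleton[of 0 "{0::nat}" "\<lambda>_. borel"]
      measurable_component_singleton[of 1 "{1::nat}" "\<lambda>_. borel"]]
  show ?thesis by (simp add: comp_def \<tau>_def)
qed

end

locale lev2 = lev +
  assumes sq1: "integrable M (\<lambda>\<omega>. (L 1 \<omega> - L 0 \<omega>)\<^sup>2)"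
    and mean1: "(\<integral>\<omega>. L 1 \<omega> - L 0 \<omega> \<partial>M) = 0"
begin

definition "m h = (\<integral>\<omega>. L h \<omega> - L 0 \<omega> \<partial>M)"
definition "q h = (\<integral>\<omega>. (L h \<omega> - L 0 \<omega>)\<^sup>2 \<partial>M)"
definition "sqi h \<longleftrightarrow> integrable M (\<lambda>\<omega>. (L h \<omega> - L 0 \<omega>)\<^sup>2)"
definition "s2 = q 1"

lemma incr:
  fixes g :: "real \<Rightarrow> real"
  assumes "0 \<le> u" "u \<le> v" "g \<in> borel_measurable borel"
  shows "integrable M (\<lambda>\<omega>. g (L v \<omega> - L u \<omega>)) \<longleftrightarrow> integrable M (\<lambda>\<omega>. g (L (v - u) \<omega> - L 0 \<omega>))"
    "(\<integral>\<omega>. g (L v \<omega> - L u \<omega>) \<partial>M) = (\<integral>\<omega>. g (L (v - u) \<omega> - L 0 \<omega>) \<partial>M)"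
proof -
  have d: "distr M borel (\<lambda>\<omega>. L v \<omega> - L u \<omega>) = distr M borel (\<lambda>\<omega>. L (v - u) \<omega> - L 0 \<omega>)"
    using stat[of u "v - u"] assms by simp
  show "integrable M (\<lambda>\<omega>. g (L v \<omega> - L u \<omega>)) \<longleftrightarrow> integrable M (\<lambda>\<omega>. g (L (v - u) \<omega> - L 0 \<omega>))"
    "(\<integral>\<omega>. g (L v \<omega> - L u \<omega>) \<partial>M) = (\<integral>\<omega>. g (L (v - u) \<omega> - L 0 \<omega>) \<partial>M)"
  proof -
    have m1: "(\<lambda>\<omega>. L v \<omega> - L u \<omega>) \<in> borel_measurable M" using assms by auto
    have m2: "(\<lambda>\<omega>. L (v - u) \<omega> - L 0 \<omega>) \<in> borel_measurable M" using assms by auto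
    show "integrable M (\<lambda>\<omega>. g (L v \<omega> - L u \<omega>)) \<longleftrightarrow> integrable M (\<lambda>\<omega>. g (L (v - u) \<omega> - L 0 \<omega>))"
      "(\<integral>\<omega>. g (L v \<omega> - L u \<omega>) \<partial>M) = (\<integral>\<omega>. g (L (v - u) \<omega> - L 0 \<omega>) \<partial>M)"
      using distr_eq_integral[OF m1 m2 d assms(3)] by auto
  qed
qed

lemma incr_sq:
  assumes "0 \<le> u" "u \<le> v" "sqi (v - u)"
  shows "integrable M (\<lambda>\<omega>. (L v \<omega> - L u \<omega>)\<^sup>2)" "(\<integral>\<omega>. (L v \<omega> - L u \<omega>)\<^sup>2 \<partial>M) = q (v - u)"
    "integrable M (\<lambda>\<omega>. L v \<omega> - L u \<omega>)" "(\<integral>\<omega>. L v \<omega> - L u \<omega> \<partial>M) = m (v - u)"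
proof -
  have i: "integrable M (\<lambda>\<omega>. (L v \<omega> - L u \<omega>)\<^sup>2)"
    using incr(1)[OF assms(1,2), of "\<lambda>x. x\<^sup>2"] assms(3) unfolding sqi_def by auto
  then show "integrable M (\<lambda>\<omega>. (L v \<omega> - L u \<omega>)\<^sup>2)" .
  show "(\<integral>\<omega>. (L v \<omega> - L u \<omega>)\<^sup>2 \<partial>M) = q (v - u)"
    using incr(2)[OF assms(1,2), of "\<lambda>x. x\<^sup>2"] unfolding q_def by auto
  show "integrable M (\<lambda>\<omega>. L v \<omega> - L u \<omega>)"
    by (rule sq_int_imp_int[OF _ _ i]) (use assms in \<open>auto intro: finite_measure_axioms\<close>)
  show "(\<integral>\<omega>. L v \<omega> - L u \<omega> \<partial>M) = m (v - u)"
    using incr(2)[OF assms(1,2), of "\<lambda>x. x"] unfolding m_def by auto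
qed

lemma sqi_int: "0 \<le> h \<Longrightarrow> sqi h \<Longrightarrow> integrable M (\<lambda>\<omega>. L h \<omega> - L 0 \<omega>)"
  using incr_sq(3)[of 0 h] by simp

lemma add:
  assumes "0 \<le> a" "0 \<le> b" "sqi a" "sqi b"
  shows "sqi (a + b) \<and> m (a + b) = m a + m b \<and> q (a + b) = q a + q b + 2 * m a * m b"
proof (cases "a = 0 \<or> b = 0")
  case True
  have "m 0 = 0" "q 0 = 0" unfolding m_def q_def by auto
  with True assms show ?thesis by auto
next
  case False
  then have ab: "0 < a" "0 < b" using assms by auto
  define Y where "Y \<omega> = L (a + b) \<omega> - L a \<omega>" for \<omega>
  define X where "X \<omega> = L a \<omega> - L 0 \<omega>" for \<omega>
  have [measurable]: "X \<in> borel_measurable M" "Y \<in> borel_measurable M"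
    unfolding X_def Y_def using ab by auto
  have Y: "integrable M (\<lambda>\<omega>. (Y \<omega>)\<^sup>2)" "(\<integral>\<omega>. (Y \<omega>)\<^sup>2 \<partial>M) = q b"
    "integrable M Y" "(\<integral>\<omega>. Y \<omega> \<partial>M) = m b"
    using incr_sq[of a "a + b"] ab assms unfolding Y_def by auto
  have X: "integrable M (\<lambda>\<omega>. (X \<omega>)\<^sup>2)" "(\<integral>\<omega>. (X \<omega>)\<^sup>2 \<partial>M) = q a"
    "integrable M X" "(\<integral>\<omega>. X \<omega> \<partial>M) = m a"
    using assms sqi_int[of a] unfolding X_def sqi_def q_def m_def by auto
  have ind: "indep_var borel X borel Y" unfolding X_def Y_def by (rule indep2[OF ab])
  have XY: "integrable M (\<lambda>\<omega>. X \<omega> * Y \<omega>)" "(\<integral>\<omega>. X \<omega> * Y \<omega> \<partial>M) = m a * m b"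
    using indep_var_integrable[OF ind X(3) Y(3)] indep_var_lebesgue_integral[OF ind X(3) Y(3)] X Y by auto
  have eq: "\<And>\<omega>. L (a + b) \<omega> - L 0 \<omega> = X \<omega> + Y \<omega>" unfolding X_def Y_def by simp
  have sq: "\<And>\<omega>. (L (a + b) \<omega> - L 0 \<omega>)\<^sup>2 = (X \<omega>)\<^sup>2 + 2 * (X \<omega> * Y \<omega>) + (Y \<omega>)\<^sup>2"
    unfolding eq by (simp add: power2_sum)
  have i2: "integrable M (\<lambda>\<omega>. (X \<omega>)\<^sup>2 + 2 * (X \<omega> * Y \<omega>) + (Y \<omega>)\<^sup>2)"
    using X Y XY by auto
  have e2: "(\<integral>\<omega>. (X \<omega>)\<^sup>2 + 2 * (X \<omega> * Y \<omega>) + (Y \<omega>)\<^sup>2 \<partial>M) = q a + 2 * (m a * m b) + q b"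
    using X Y XY by (simp add: integral_add integrable_add)
  have e1: "(\<integral>\<omega>. X \<omega> + Y \<omega> \<partial>M) = m a + m b" using X Y by simp
  have f1: "(\<lambda>\<omega>. (L (a + b) \<omega> - L 0 \<omega>)\<^sup>2) = (\<lambda>\<omega>. (X \<omega>)\<^sup>2 + 2 * (X \<omega> * Y \<omega>) + (Y \<omega>)\<^sup>2)"
    using sq by auto
  have f2: "(\<lambda>\<omega>. L (a + b) \<omega> - L 0 \<omega>) = (\<lambda>\<omega>. X \<omega> + Y \<omega>)"
    using eq by auto
  show ?thesis
    unfolding sqi_def m_def[of "a+b"] q_def[of "a+b"] f1 f2 using i2 e2 e1 by simp
qed

lemma sqi0: "sqi 0" and m0: "m 0 = 0" and q0: "q 0 = 0"
  unfolding sqi_def m_def q_def by auto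

lemma rat_inv:
  assumes "0 < n"
  shows "sqi (1 / real n)"
proof (cases "n = 1")
  case True then show ?thesis using sq1 unfolding sqi_def by simp
next
  case False
  with assms have n2: "2 \<le> n" by auto
  define a where "a = 1 / real n"
  define b where "b = 1 - 1 / real n"
  have ab: "0 < a" "0 < b" "a + b = 1" using n2 unfolding a_def b_def by (auto simp: field_simps)
  have ind: "indep_var borel (\<lambda>\<omega>. L a \<omega> - L 0 \<omega>) borel (\<lambda>\<omega>. L (a + b) \<omega> - L a \<omega>)"
    by (rule indep2[OF ab(1,2)])
  have "integrable M (\<lambda>\<omega>. ((L a \<omega> - L 0 \<omega>) + (L (a + b) \<omega> - L a \<omega>))\<^sup>2)"
    using sq1 ab(3) by simp
  from summand_sq_int[OF ind this] show ?thesis unfolding sqi_def a_def by simp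
qed

lemma rat_mult:
  assumes "0 < n"
  shows "sqi (real k / real n) \<and> m (real k / real n) = real k * m (1 / real n) \<and>
     q (real k / real n) = real k * q (1 / real n) + real k * (real k - 1) * (m (1 / real n))\<^sup>2"
proof (induction k)
  case 0 then show ?case using sqi0 m0 q0 by simp
next
  case (Suc k)
  have e: "real (Suc k) / real n = real k / real n + 1 / real n" by (simp add: add_divide_distrib)
  have "sqi (real k / real n + 1 / real n) \<and> m (real k / real n + 1 / real n) = m (real k / real n) + m (1 / real n) \<and>
     q (real k / real n + 1 / real n) = q (real k / real n) + q (1 / real n) + 2 * m (real k / real n) * m (1 / real n)"
    by (rule add) (use Suc rat_inv[OF assms] in auto)
  then show ?case unfolding e using Suc by (simp add: algebra_simps power2_eq_square)
qed

lemma rat_facts: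
  assumes "0 < n"
  shows "sqi (real k / real n) \<and> m (real k / real n) = 0 \<and> q (real k / real n) = s2 * (real k / real n)"
proof -
  have n: "real n / real n = 1" using assms by simp
  from rat_mult[OF assms, of n] have "m 1 = real n * m (1 / real n)" "q 1 = real n * q (1 / real n) + real n * (real n - 1) * (m (1 / real n))\<^sup>2"
    unfolding n by auto
  moreover have "m 1 = 0" using mean1 unfolding m_def .
  ultimately have m1: "m (1 / real n) = 0" and q1: "q (1 / real n) = s2 / real n"
    using assms by (auto simp: s2_def field_simps)
  show ?thesis using rat_mult[OF assms, of k] m1 q1 by simp
qed

lemma rat_facts':
  assumes "r \<in> \<rat>" "0 \<le> r"
  shows "sqi r \<and> m r = 0 \<and> q r = s2 * r"
proof -
  obtain a b where "b \<noteq> 0" "\<bar>r\<bar> = real a / real b"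
    using Rats_abs_nat_div_natE[OF assms(1)] by metis
  then show ?thesis using rat_facts[of b a] assms(2) by auto
qed

lemma s2_nonneg: "0 \<le> s2"
  unfolding s2_def q_def by (rule integral_nonneg_AE) auto

lemma rat_diff_sq:
  assumes "r1 \<in> \<rat>" "r2 \<in> \<rat>" "0 \<le> r1" "0 \<le> r2"
  shows "integrable M (\<lambda>\<omega>. (L r1 \<omega> - L r2 \<omega>)\<^sup>2) \<and> (\<integral>\<omega>. (L r1 \<omega> - L r2 \<omega>)\<^sup>2 \<partial>M) = s2 * \<bar>r1 - r2\<bar>"
proof -
  have sym: "\<And>a b. (\<lambda>\<omega>. (L a \<omega> - L b \<omega>)\<^sup>2) = (\<lambda>\<omega>. (L b \<omega> - L a \<omega>)\<^sup>2)"
    by (auto simp: power2_commute)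
  show ?thesis
  proof (cases "r1 \<le> r2")
    case True
    have "sqi (r2 - r1) \<and> m (r2 - r1) = 0 \<and> q (r2 - r1) = s2 * (r2 - r1)"
      by (rule rat_facts') (use assms True in auto)
    then show ?thesis using incr_sq[of r1 r2] assms True sym[of r1 r2] by auto
  next
    case False
    have "sqi (r1 - r2) \<and> m (r1 - r2) = 0 \<and> q (r1 - r2) = s2 * (r1 - r2)"
      by (rule rat_facts') (use assms False in auto)
    then show ?thesis using incr_sq[of r2 r1] assms False by auto
  qed
qed

definition rs :: "real \<Rightarrow> nat \<Rightarrow> real" where
  "rs h n = (of_int \<lfloor>h * real (Suc n)\<rfloor> + 1) / real (Suc n)"

lemma rs_props:
  shows "rs h n \<in> \<rat>" "h < rs h n" "rs h n \<le> h + inverse (real (Suc n))" "rs h \<longlonglongrightarrow> h"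
    "0 \<le> h \<Longrightarrow> 0 \<le> rs h n"
proof -
  have p: "0 < real (Suc n)" for n by simp
  show "rs h n \<in> \<rat>" unfolding rs_def by (intro Rats_divide Rats_add Rats_of_int Rats_of_nat Rats_1)
  have lt: "h < rs h n" for n
  proof -
    have "h * real (Suc n) < of_int \<lfloor>h * real (Suc n)\<rfloor> + 1" by linarith
    then show ?thesis unfolding rs_def using p[of n] by (simp add: field_simps)
  qed
  then show "h < rs h n" .
  have le: "rs h n \<le> h + inverse (real (Suc n))" for n
  proof -
    have "of_int \<lfloor>h * real (Suc n)\<rfloor> + 1 \<le> h * real (Suc n) + 1" by linarith
    then have "(of_int \<lfloor>h * real (Suc n)\<rfloor> + 1) / real (Suc n) \<le> (h * real (Suc n) + 1) / real (Suc n)"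
      by (rule divide_right_mono) simp
    also have "\<dots> = h + inverse (real (Suc n))" using p[of n] by (simp add: field_simps)
    finally show ?thesis unfolding rs_def .
  qed
  then show "rs h n \<le> h + inverse (real (Suc n))" .
  show "rs h \<longlonglongrightarrow> h"
  proof (rule tendsto_sandwich[OF _ _ tendsto_const LIMSEQ_inverse_real_of_nat_add[of h]])
    show "\<forall>\<^sub>F n in sequentially. h \<le> rs h n" using lt by (intro always_eventually allI less_imp_le)
    show "\<forall>\<^sub>F n in sequentially. rs h n \<le> h + inverse (real (Suc n))" using le by (intro always_eventually allI)
  qed
  show "0 \<le> h \<Longrightarrow> 0 \<le> rs h n" using lt[of n] by linarith
qed

lemma conv_right:
  assumes "0 \<le> h" "r \<longlonglongrightarrow> h" "\<And>n. h < r n"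
  shows "AE \<omega> in M. (\<lambda>n. L (r n) \<omega>) \<longlonglongrightarrow> L h \<omega>"
proof (rule eventually_mono[OF cadlag])
  fix \<omega> assume "cadlag_nonneg (\<lambda>t. L t \<omega>)"
  then have "continuous (at_right h) (\<lambda>t. L t \<omega>)" using assms(1) unfolding cadlag_nonneg_def by blast
  then have c: "((\<lambda>t. L t \<omega>) \<longlongrightarrow> L h \<omega>) (at_right h)" by (simp add: continuous_within)
  have f: "filterlim r (at_right h) sequentially"
    by (rule tendsto_imp_filterlim_at_right[OF assms(2)]) (use assms(3) in auto)
  show "(\<lambda>n. L (r n) \<omega>) \<longlonglongrightarrow> L h \<omega>" by (rule filterlim_compose[OF c f])
qed

lemma gen_approx:
  assumes "0 \<le> h"
  shows "integrable M (\<lambda>\<omega>. (L h \<omega> - L (rs h n) \<omega>)\<^sup>2) \<and>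
    (\<integral>\<omega>. (L h \<omega> - L (rs h n) \<omega>)\<^sup>2 \<partial>M) \<le> s2 * (rs h n - h)"
proof -
  note rp = rs_props[of h]
  have nn: "\<And>k. 0 \<le> rs h k" using rp(5) assms by auto
  have m1: "\<And>k. L (rs h k) \<in> borel_measurable M" using nn by auto
  have m2: "L (rs h n) \<in> borel_measurable M" "L h \<in> borel_measurable M" using nn assms by auto
  have rd: "integrable M (\<lambda>\<omega>. (L (rs h k) \<omega> - L (rs h n) \<omega>)\<^sup>2) \<and>
     (\<integral>\<omega>. (L (rs h k) \<omega> - L (rs h n) \<omega>)\<^sup>2 \<partial>M) = s2 * \<bar>rs h k - rs h n\<bar>" for k
    by (rule rat_diff_sq) (use rp(1) nn in auto)
  have i: "\<And>k. integrable M (\<lambda>\<omega>. (L (rs h k) \<omega> - L (rs h n) \<omega>)\<^sup>2)" using rd by blast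
  have l: "\<And>k. (\<integral>\<omega>. (L (rs h k) \<omega> - L (rs h n) \<omega>)\<^sup>2 \<partial>M) \<le> s2 * \<bar>rs h k - rs h n\<bar>"
    using rd by simp
  have t: "(\<lambda>k. s2 * \<bar>rs h k - rs h n\<bar>) \<longlonglongrightarrow> s2 * \<bar>h - rs h n\<bar>"
    by (intro tendsto_intros rp(4))
  have c: "AE \<omega> in M. (\<lambda>k. L (rs h k) \<omega>) \<longlonglongrightarrow> L h \<omega>"
    by (rule conv_right[OF assms rp(4) rp(2)])
  note fl = fatou_sq_lim[of "\<lambda>k. L (rs h k)" M "L (rs h n)" "L h", OF m1 m2 i l t c]
  have "\<bar>h - rs h n\<bar> = rs h n - h" using rp(2)[of n] by simp
  then show ?thesis using fl by simp
qed

lemma gen1: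
  assumes "0 \<le> h"
  shows "sqi h \<and> m h = 0"
proof -
  note rp = rs_props[of h]
  have nn: "\<And>k. 0 \<le> rs h k" using rp(5) assms by auto
  have rf: "\<And>k. sqi (rs h k) \<and> m (rs h k) = 0 \<and> q (rs h k) = s2 * rs h k"
    using rat_facts' rp(1) nn by blast
  have meas: "\<And>k. (\<lambda>\<omega>. L h \<omega> - L (rs h k) \<omega>) \<in> borel_measurable M"
     "\<And>k. (\<lambda>\<omega>. L (rs h k) \<omega> - L 0 \<omega>) \<in> borel_measurable M" using nn assms by auto
  have ga: "\<And>k. integrable M (\<lambda>\<omega>. (L h \<omega> - L (rs h k) \<omega>)\<^sup>2) \<and>
    (\<integral>\<omega>. (L h \<omega> - L (rs h k) \<omega>)\<^sup>2 \<partial>M) \<le> s2 * (rs h k - h)"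
    using gen_approx[OF assms] by blast
  have sq: "integrable M (\<lambda>\<omega>. ((L h \<omega> - L (rs h 0) \<omega>) + (L (rs h 0) \<omega> - L 0 \<omega>))\<^sup>2)"
    by (rule sq_int_add[OF meas(1) meas(2)]) (use ga rf in \<open>auto simp: sqi_def\<close>)
  then have s: "sqi h" unfolding sqi_def by simp
  have mb: "(m h)\<^sup>2 \<le> s2 * (rs h k - h)" for k
  proof -
    have i1: "integrable M (\<lambda>\<omega>. L h \<omega> - L (rs h k) \<omega>)"
      by (rule sq_int_imp_int[OF _ meas(1)]) (use ga in \<open>auto intro: finite_measure_axioms\<close>)
    have i2: "integrable M (\<lambda>\<omega>. L (rs h k) \<omega> - L 0 \<omega>)" using sqi_int[of "rs h k"] nn rf by auto
    have "(\<integral>\<omega>. L h \<omega> - L 0 \<omega> \<partial>M) = (\<integral>\<omega>. L h \<omega> - L (rs h k) \<omega> \<partial>M) + (\<integral>\<omega>. L (rs h k) \<omega> - L 0 \<omega> \<partial>M)"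
      by (subst Bochner_Integration.integral_add[OF i1 i2, symmetric]) simp
    then have "m h = (\<integral>\<omega>. L h \<omega> - L (rs h k) \<omega> \<partial>M)"
      using rf[of k] unfolding m_def by simp
    then have "(m h)\<^sup>2 = (\<integral>\<omega>. L h \<omega> - L (rs h k) \<omega> \<partial>M)\<^sup>2" by simp
    also have "\<dots> \<le> (\<integral>\<omega>. (L h \<omega> - L (rs h k) \<omega>)\<^sup>2 \<partial>M)"
      by (rule sq_integral_le[OF meas(1)]) (use ga in auto)
    also have "\<dots> \<le> s2 * (rs h k - h)" using ga by auto
    finally show ?thesis .
  qed
  have "(\<lambda>k. s2 * (rs h k - h)) \<longlonglongrightarrow> s2 * (h - h)" by (intro tendsto_intros rp(4))
  then have "(m h)\<^sup>2 \<le> s2 * (h - h)" by (rule LIMSEQ_le_const) (use mb in auto)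
  then show ?thesis using s by simp
qed

lemma qadd:
  assumes "0 \<le> a" "0 \<le> b" shows "q (a + b) = q a + q b"
  using add[OF assms] gen1 assms by auto

lemma q_nonneg: "0 \<le> q h" unfolding q_def by (rule integral_nonneg_AE) auto

lemma gen_facts:
  assumes "0 \<le> h"
  shows "sqi h \<and> m h = 0 \<and> q h = s2 * h"
proof -
  note rp = rs_props[of h]
  have nn: "\<And>k. 0 \<le> rs h k" using rp(5) assms by auto
  have rf: "\<And>k. sqi (rs h k) \<and> m (rs h k) = 0 \<and> q (rs h k) = s2 * rs h k"
    using rat_facts' rp(1) nn by blast
  have dec: "q (rs h k) = q h + q (rs h k - h)" for k
    using qadd[OF assms, of "rs h k - h"] rp(2)[of k] by simp
  have up: "q h \<le> s2 * rs h k" for k using dec[of k] rf[of k] q_nonneg[of "rs h k - h"] by simp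
  have "(\<lambda>k. s2 * rs h k) \<longlonglongrightarrow> s2 * h" by (intro tendsto_intros rp(4))
  then have u: "q h \<le> s2 * h" by (rule LIMSEQ_le_const) (use up in auto)
  have "q (rs h 0 - h) = (\<integral>\<omega>. (L (rs h 0) \<omega> - L h \<omega>)\<^sup>2 \<partial>M)"
    using incr_sq(2)[of h "rs h 0"] assms rp(2)[of 0] gen1[of "rs h 0 - h"] by auto
  also have "\<dots> = (\<integral>\<omega>. (L h \<omega> - L (rs h 0) \<omega>)\<^sup>2 \<partial>M)" by (simp add: power2_commute)
  also have "\<dots> \<le> s2 * (rs h 0 - h)" using gen_approx[OF assms, of 0] by auto
  finally have "q h \<ge> s2 * h" using dec[of 0] rf[of 0] by (simp add: algebra_simps)
  with u gen1[OF assms] show ?thesis by simp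
qed

lemma left_lim:
  assumes c: "0 < c"
  shows "AE \<omega> in M. Lim (at_left c) (\<lambda>u. L u \<omega>) = L c \<omega>"
proof -
  define sk where "sk k = c - c / 2 * inverse (real (Suc k))" for k
  have sk_lt: "sk k < c" for k using c unfolding sk_def by simp
  have sk_pos: "0 \<le> sk k" for k
  proof -
    have "inverse (real (Suc k)) \<le> 1" by (rule inverse_le_1_iff[THEN iffD2]) simp
    then have "c / 2 * inverse (real (Suc k)) \<le> c / 2 * 1" using c by (intro mult_left_mono) auto
    then show ?thesis unfolding sk_def using c by simp
  qed
  have sk_lim: "sk \<longlonglongrightarrow> c - c / 2 * 0" unfolding sk_def by (intro tendsto_intros LIMSEQ_inverse_real_of_nat)
  then have sk_lim': "sk \<longlonglongrightarrow> c" by simp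
  have m1: "\<And>k. L (sk k) \<in> borel_measurable M" using sk_pos by auto
  have m2: "L c \<in> borel_measurable M" using c by auto
  have rd: "integrable M (\<lambda>\<omega>. (L (sk k) \<omega> - L c \<omega>)\<^sup>2) \<and>
     (\<integral>\<omega>. (L (sk k) \<omega> - L c \<omega>)\<^sup>2 \<partial>M) = s2 * (c - sk k)" for k
  proof -
    have g: "sqi (c - sk k) \<and> m (c - sk k) = 0 \<and> q (c - sk k) = s2 * (c - sk k)"
      using gen_facts[of "c - sk k"] sk_lt[of k] by simp
    have e: "(\<lambda>\<omega>. (L (sk k) \<omega> - L c \<omega>)\<^sup>2) = (\<lambda>\<omega>. (L c \<omega> - L (sk k) \<omega>)\<^sup>2)"
      by (auto simp: power2_commute)
    show ?thesis unfolding e using incr_sq[of "sk k" c] g sk_pos[of k] sk_lt[of k] by auto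
  qed
  have i: "\<And>k. integrable M (\<lambda>\<omega>. (L (sk k) \<omega> - L c \<omega>)\<^sup>2)" using rd by blast
  have l: "\<And>k. (\<integral>\<omega>. (L (sk k) \<omega> - L c \<omega>)\<^sup>2 \<partial>M) \<le> s2 * (c - sk k)" using rd by simp
  have t: "(\<lambda>k. s2 * (c - sk k)) \<longlonglongrightarrow> s2 * (c - c)" by (intro tendsto_intros sk_lim')
  have "(\<integral>\<^sup>+\<omega>. liminf (\<lambda>k. ennreal ((L (sk k) \<omega> - L c \<omega>)\<^sup>2)) \<partial>M) \<le> ennreal (s2 * (c - c))"
    by (rule fatou_sq[OF m1 m2 i l t])
  then have "(\<integral>\<^sup>+\<omega>. liminf (\<lambda>k. ennreal ((L (sk k) \<omega> - L c \<omega>)\<^sup>2)) \<partial>M) = 0" by simp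
  then have ae0: "AE \<omega> in M. liminf (\<lambda>k. ennreal ((L (sk k) \<omega> - L c \<omega>)\<^sup>2)) = 0"
    by (subst (asm) nn_integral_0_iff_AE) (use m1 m2 in auto)
  have fl: "filterlim sk (at_left c) sequentially"
    by (rule tendsto_imp_filterlim_at_left[OF sk_lim']) (use sk_lt in auto)
  show ?thesis
  proof (rule eventually_mono[OF eventually_conj[OF ae0 cadlag]])
    fix \<omega> assume a: "liminf (\<lambda>k. ennreal ((L (sk k) \<omega> - L c \<omega>)\<^sup>2)) = 0 \<and> cadlag_nonneg (\<lambda>t. L t \<omega>)"
    then obtain l where lt: "((\<lambda>u. L u \<omega>) \<longlongrightarrow> l) (at_left c)" using c unfolding cadlag_nonneg_def by blast
    then have lim: "Lim (at_left c) (\<lambda>u. L u \<omega>) = l" by (intro tendsto_Lim) auto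
    have "(\<lambda>k. L (sk k) \<omega>) \<longlonglongrightarrow> l" by (rule filterlim_compose[OF lt fl])
    then have "(\<lambda>k. ennreal ((L (sk k) \<omega> - L c \<omega>)\<^sup>2)) \<longlonglongrightarrow> ennreal ((l - L c \<omega>)\<^sup>2)"
      by (intro tendsto_ennrealI tendsto_intros)
    then have "liminf (\<lambda>k. ennreal ((L (sk k) \<omega> - L c \<omega>)\<^sup>2)) = ennreal ((l - L c \<omega>)\<^sup>2)"
      by (metis lim_imp_Liminf sequentially_bot)
    with a have "ennreal ((l - L c \<omega>)\<^sup>2) = 0" by simp
    then have "(l - L c \<omega>)\<^sup>2 = 0" by (simp add: ennreal_eq_0_iff)
    then show "Lim (at_left c) (\<lambda>u. L u \<omega>) = L c \<omega>" using lim by simp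
  qed
qed

end



lemma ind_ov:
  fixes a b c d :: real
  assumes "a \<le> b" "c \<le> d"
  shows "integrable lborel (\<lambda>x. indicator {a<..b} x * indicator {c<..d} x :: real)"
    "(\<integral>x. indicator {a<..b} x * indicator {c<..d} x \<partial>lborel :: real) = (\<bar>b - c\<bar> + \<bar>a - d\<bar> - \<bar>b - d\<bar> - \<bar>a - c\<bar>) / 2"
proof -
  have e: "(\<lambda>x. indicator {a<..b} x * indicator {c<..d} x :: real) = indicator {max a c<..min b d}"
    by (auto simp: indicator_def fun_eq_iff)
  show "integrable lborel (\<lambda>x. indicator {a<..b} x * indicator {c<..d} x :: real)"
    unfolding e by (cases "max a c \<le> min b d") auto
  show "(\<integral>x. indicator {a<..b} x * indicator {c<..d} x \<partial>lborel :: real) = (\<bar>b - c\<bar> + \<bar>a - d\<bar> - \<bar>b - d\<bar> - \<bar>a - c\<bar>) / 2"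
  proof (cases "max a c \<le> min b d")
    case True
    then have "(\<integral>x. indicator {a<..b} x * indicator {c<..d} x \<partial>lborel :: real) = min b d - max a c"
      unfolding e by simp
    also have "\<dots> = (\<bar>b - c\<bar> + \<bar>a - d\<bar> - \<bar>b - d\<bar> - \<bar>a - c\<bar>) / 2"
      using True assms by (auto simp: abs_if min_def max_def split: if_splits)
    finally show ?thesis .
  next
    case False
    then have emp: "{max a c<..min b d} = {}" by auto
    have "(\<integral>x. indicator {a<..b} x * indicator {c<..d} x \<partial>lborel :: real) = 0"
      unfolding e emp by simp
    also have "\<dots> = (\<bar>b - c\<bar> + \<bar>a - d\<bar> - \<bar>b - d\<bar> - \<bar>a - c\<bar>) / 2"
      using False assms by (auto simp: abs_if min_def max_def split: if_splits)
    finally show ?thesis .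
  qed
qed

lemma ioc_int: "integrable lborel (indicator {a<..b::real} :: real \<Rightarrow> real)"
proof (cases "a \<le> b")
  case True then show ?thesis by auto
next
  case False then have "{a<..b} = {}" by auto
  then show ?thesis by simp
qed

lemma int_dsum:
  fixes f :: "'i \<Rightarrow> 'i \<Rightarrow> 'a \<Rightarrow> real"
  assumes "finite I" "\<And>i j. integrable M (f i j)"
  shows "(\<integral>x. (\<Sum>i\<in>I. \<Sum>j\<in>I. f i j x) \<partial>M) = (\<Sum>i\<in>I. \<Sum>j\<in>I. (\<integral>x. f i j x \<partial>M))"
  using assms by (simp add: Bochner_Integration.integral_sum Bochner_Integration.integrable_sum)

lemma path_meas:
  assumes "levy_process M L"
  shows "path_nonneg L \<in> measurable M (Pi\<^sub>M {0..} (\<lambda>_. borel))"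
proof -
  interpret lev M L by (unfold_locales) fact
  show ?thesis unfolding path_nonneg_def by (intro measurable_restrict) auto
qed

lemma path_eval: "0 \<le> u \<Longrightarrow> path_nonneg L \<omega> u = L u \<omega>"
  unfolding path_nonneg_def by simp

locale two =
  fixes M :: "'a measure" and L1 L2 :: "real \<Rightarrow> 'a \<Rightarrow> real"
  assumes lv1: "levy_process M L1" and lv2: "levy_process M L2"
    and iid: "iid_processes M L1 L2"
    and sqL: "integrable M (\<lambda>\<omega>. (L1 1 \<omega>)\<^sup>2)"
    and meanL: "(\<integral>\<omega>. L1 1 \<omega> \<partial>M) = 0"
begin

interpretation P1: lev M L1 by unfold_locales (rule lv1)
interpretation P2: lev M L2 by unfold_locales (rule lv2)

lemma dist12:
  assumes "0 \<le> u"
  shows "distr M borel (\<lambda>\<omega>. L1 u \<omega> - L1 0 \<omega>) = distr M borel (\<lambda>\<omega>. L2 u \<omega> - L2 0 \<omega>)"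
proof -
  define \<phi> where "\<phi> f = f u - f 0" for f :: "real \<Rightarrow> real"
  have \<phi>m: "\<phi> \<in> borel_measurable (Pi\<^sub>M {0..} (\<lambda>_. borel))"
    unfolding \<phi>_def by (intro borel_measurable_diff measurable_component_singleton) (use assms in auto)
  have c1: "(\<phi> \<circ> path_nonneg L1) = (\<lambda>\<omega>. L1 u \<omega> - L1 0 \<omega>)"
    using assms by (auto simp: \<phi>_def path_eval)
  have c2: "(\<phi> \<circ> path_nonneg L2) = (\<lambda>\<omega>. L2 u \<omega> - L2 0 \<omega>)"
    using assms by (auto simp: \<phi>_def path_eval)
  have d: "distr M (Pi\<^sub>M {0..} (\<lambda>_. borel)) (path_nonneg L1) = distr M (Pi\<^sub>M {0..} (\<lambda>_. borel)) (path_nonneg L2)"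
    using iid unfolding iid_processes_def by blast
  have "distr M borel (\<phi> \<circ> path_nonneg L1) = distr (distr M (Pi\<^sub>M {0..} (\<lambda>_. borel)) (path_nonneg L1)) borel \<phi>"
    by (rule distr_distr[symmetric, OF \<phi>m path_meas[OF lv1]])
  also have "\<dots> = distr M borel (\<phi> \<circ> path_nonneg L2)"
    unfolding d by (rule distr_distr[OF \<phi>m path_meas[OF lv2]])
  finally show ?thesis unfolding c1 c2 .
qed

lemma indep12:
  assumes "0 \<le> u" "0 \<le> w"
  shows "prob_space.indep_var M borel (\<lambda>\<omega>. L1 u \<omega> - L1 0 \<omega>) borel (\<lambda>\<omega>. L2 w \<omega> - L2 0 \<omega>)"
proof -
  have i: "P1.indep_var (Pi\<^sub>M {0..} (\<lambda>_. borel)) (path_nonneg L1) (Pi\<^sub>M {0..} (\<lambda>_. borel)) (path_nonneg L2)"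
    using iid unfolding iid_processes_def by blast
  have m1: "(\<lambda>f. f u - f 0 :: real) \<in> borel_measurable (Pi\<^sub>M {0..} (\<lambda>_. borel))"
    by (intro borel_measurable_diff measurable_component_singleton) (use assms in auto)
  have m2: "(\<lambda>f. f w - f 0 :: real) \<in> borel_measurable (Pi\<^sub>M {0..} (\<lambda>_. borel))"
    by (intro borel_measurable_diff measurable_component_singleton) (use assms in auto)
  from P1.indep_var_compose[OF i m1 m2] show ?thesis
    using assms by (simp add: comp_def path_eval)
qed

lemma sq1': "integrable M (\<lambda>\<omega>. (L1 1 \<omega> - L1 0 \<omega>)\<^sup>2)"
proof (rule integrable_cong_AE_imp[OF sqL])
  show "(\<lambda>\<omega>. (L1 1 \<omega> - L1 0 \<omega>)\<^sup>2) \<in> borel_measurable M" by simp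
  show "AE \<omega> in M. (L1 1 \<omega>)\<^sup>2 = (L1 1 \<omega> - L1 0 \<omega>)\<^sup>2"
    by (rule eventually_mono[OF P1.L0]) simp
qed

lemma mean1': "(\<integral>\<omega>. L1 1 \<omega> - L1 0 \<omega> \<partial>M) = 0"
proof -
  have "(\<integral>\<omega>. L1 1 \<omega> - L1 0 \<omega> \<partial>M) = (\<integral>\<omega>. L1 1 \<omega> \<partial>M)"
  proof (rule integral_cong_AE)
    show "AE \<omega> in M. L1 1 \<omega> - L1 0 \<omega> = L1 1 \<omega>"
      by (rule eventually_mono[OF P1.L0]) simp
  qed simp_all
  then show ?thesis using meanL by simp
qed

lemma d1: "distr M borel (\<lambda>\<omega>. L1 1 \<omega> - L1 0 \<omega>) = distr M borel (\<lambda>\<omega>. L2 1 \<omega> - L2 0 \<omega>)"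
  using dist12[of 1] by simp

lemma mm: "(\<lambda>\<omega>. L1 1 \<omega> - L1 0 \<omega>) \<in> borel_measurable M" "(\<lambda>\<omega>. L2 1 \<omega> - L2 0 \<omega>) \<in> borel_measurable M"
  by auto

lemma sq2': "integrable M (\<lambda>\<omega>. (L2 1 \<omega> - L2 0 \<omega>)\<^sup>2)"
proof -
  have g: "(\<lambda>x::real. x\<^sup>2) \<in> borel_measurable borel" by simp
  show ?thesis using distr_eq_integral(1)[OF mm d1 g] sq1' by simp
qed

lemma mean2': "(\<integral>\<omega>. L2 1 \<omega> - L2 0 \<omega> \<partial>M) = 0"
proof -
  have g: "(\<lambda>x::real. x) \<in> borel_measurable borel" by simp
  show ?thesis using distr_eq_integral(2)[OF mm d1 g] mean1' by simp
qed

sublocale A: lev2 M L1 by unfold_locales (rule lv1, rule sq1', rule mean1')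
sublocale B: lev2 M L2 by unfold_locales (rule lv2, rule sq2', rule mean2')

lemma s2_eq: "B.s2 = A.s2"
proof -
  have g: "(\<lambda>x::real. x\<^sup>2) \<in> borel_measurable borel" by simp
  show ?thesis unfolding A.s2_def B.s2_def A.q_def B.q_def
    using distr_eq_integral(2)[OF mm d1 g] by simp
qed

definition Z :: "real \<Rightarrow> 'a \<Rightarrow> real" where
  "Z t \<omega> = (if 0 \<le> t then L1 t \<omega> - L1 0 \<omega> else L2 0 \<omega> - L2 (- t) \<omega>)"

lemma Z_meas[measurable]: "Z t \<in> borel_measurable M"
  unfolding Z_def by (cases "0 \<le> t") auto

lemma Z0: "Z 0 \<omega> = 0" unfolding Z_def by simp

lemma Z_diff_le:
  assumes "v \<le> u"
  shows "integrable M (\<lambda>\<omega>. (Z u \<omega> - Z v \<omega>)\<^sup>2) \<and> (\<integral>\<omega>. (Z u \<omega> - Z v \<omega>)\<^sup>2 \<partial>M) = A.s2 * (u - v)"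
proof -
  consider "0 \<le> v" | "u < 0" | "v < 0" "0 \<le> u" using assms by linarith
  then show ?thesis
  proof cases
    case 1
    then have e: "\<And>\<omega>. Z u \<omega> - Z v \<omega> = L1 u \<omega> - L1 v \<omega>" using assms unfolding Z_def by auto
    have g: "A.sqi (u - v) \<and> A.m (u - v) = 0 \<and> A.q (u - v) = A.s2 * (u - v)"
      by (rule A.gen_facts) (use assms in simp)
    show ?thesis unfolding e using A.incr_sq[of v u] g 1 assms by simp
  next
    case 2
    then have e: "\<And>\<omega>. Z u \<omega> - Z v \<omega> = L2 (- v) \<omega> - L2 (- u) \<omega>" using assms unfolding Z_def by auto
    have g: "B.sqi ((- v) - (- u)) \<and> B.m ((- v) - (- u)) = 0 \<and> B.q ((- v) - (- u)) = B.s2 * ((- v) - (- u))"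
      by (rule B.gen_facts) (use assms in simp)
    show ?thesis unfolding e using B.incr_sq[of "- u" "- v"] g 2 assms s2_eq by simp
  next
    case 3
    define X where "X \<omega> = L1 u \<omega> - L1 0 \<omega>" for \<omega>
    define Y where "Y \<omega> = L2 (- v) \<omega> - L2 0 \<omega>" for \<omega>
    have [measurable]: "X \<in> borel_measurable M" "Y \<in> borel_measurable M"
      unfolding X_def Y_def using 3 by auto
    have e: "\<And>\<omega>. Z u \<omega> - Z v \<omega> = X \<omega> + Y \<omega>" using 3 unfolding Z_def X_def Y_def by auto
    have gX: "A.sqi u \<and> A.m u = 0 \<and> A.q u = A.s2 * u" by (rule A.gen_facts) (use 3 in simp)
    have gY: "B.sqi (- v) \<and> B.m (- v) = 0 \<and> B.q (- v) = B.s2 * (- v)" by (rule B.gen_facts) (use 3 in simp)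
    have X: "integrable M (\<lambda>\<omega>. (X \<omega>)\<^sup>2)" "(\<integral>\<omega>. (X \<omega>)\<^sup>2 \<partial>M) = A.s2 * u"
      "integrable M X" "(\<integral>\<omega>. X \<omega> \<partial>M) = 0"
      using gX A.sqi_int[of u] 3 unfolding X_def A.sqi_def A.q_def A.m_def by auto
    have Y: "integrable M (\<lambda>\<omega>. (Y \<omega>)\<^sup>2)" "(\<integral>\<omega>. (Y \<omega>)\<^sup>2 \<partial>M) = A.s2 * (- v)"
      "integrable M Y" "(\<integral>\<omega>. Y \<omega> \<partial>M) = 0"
      using gY B.sqi_int[of "- v"] 3 s2_eq unfolding Y_def B.sqi_def B.q_def B.m_def by auto
    have ind: "prob_space.indep_var M borel X borel Y" unfolding X_def Y_def by (rule indep12) (use 3 in auto)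
    have XY: "integrable M (\<lambda>\<omega>. X \<omega> * Y \<omega>)" "(\<integral>\<omega>. X \<omega> * Y \<omega> \<partial>M) = 0"
      using prob_space.indep_var_integrable[OF P1.ps ind X(3) Y(3)] prob_space.indep_var_lebesgue_integral[OF P1.ps ind X(3) Y(3)] X Y by auto
    have f: "(\<lambda>\<omega>. (Z u \<omega> - Z v \<omega>)\<^sup>2) = (\<lambda>\<omega>. (X \<omega>)\<^sup>2 + 2 * (X \<omega> * Y \<omega>) + (Y \<omega>)\<^sup>2)"
      unfolding e by (auto simp: power2_sum)
    have i2: "integrable M (\<lambda>\<omega>. (X \<omega>)\<^sup>2 + 2 * (X \<omega> * Y \<omega>) + (Y \<omega>)\<^sup>2)"
      using X Y XY by auto
    have e2: "(\<integral>\<omega>. (X \<omega>)\<^sup>2 + 2 * (X \<omega> * Y \<omega>) + (Y \<omega>)\<^sup>2 \<partial>M) = A.s2 * u + 2 * 0 + A.s2 * (- v)"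
      using X Y XY by (simp add: Bochner_Integration.integral_add integrable_add)
    show ?thesis unfolding f using i2 e2 by (simp add: algebra_simps)
  qed
qed

lemma Z_diff:
  "integrable M (\<lambda>\<omega>. (Z u \<omega> - Z v \<omega>)\<^sup>2) \<and> (\<integral>\<omega>. (Z u \<omega> - Z v \<omega>)\<^sup>2 \<partial>M) = A.s2 * \<bar>u - v\<bar>"
proof (cases "v \<le> u")
  case True then show ?thesis using Z_diff_le[OF True] by simp
next
  case False
  have e: "(\<lambda>\<omega>. (Z u \<omega> - Z v \<omega>)\<^sup>2) = (\<lambda>\<omega>. (Z v \<omega> - Z u \<omega>)\<^sup>2)" by (auto simp: power2_commute)
  show ?thesis unfolding e using Z_diff_le[of u v] False by simp
qed

lemma Z_sq: "integrable M (\<lambda>\<omega>. (Z u \<omega>)\<^sup>2)"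
  using Z_diff[of u 0] by (simp add: Z0)

lemma Z_cov:
  "integrable M (\<lambda>\<omega>. (Z b \<omega> - Z a \<omega>) * (Z d \<omega> - Z c \<omega>)) \<and>
   (\<integral>\<omega>. (Z b \<omega> - Z a \<omega>) * (Z d \<omega> - Z c \<omega>) \<partial>M) = A.s2 * ((\<bar>b - c\<bar> + \<bar>a - d\<bar> - \<bar>b - d\<bar> - \<bar>a - c\<bar>) / 2)"
proof -
  have p: "(\<lambda>\<omega>. (Z b \<omega> - Z a \<omega>) * (Z d \<omega> - Z c \<omega>)) = (\<lambda>\<omega>.
     ((Z b \<omega> - Z c \<omega>)\<^sup>2 + (Z a \<omega> - Z d \<omega>)\<^sup>2 - (Z b \<omega> - Z d \<omega>)\<^sup>2 - (Z a \<omega> - Z c \<omega>)\<^sup>2) / 2)"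
    by (auto simp: power2_eq_square field_simps)
  have i1: "integrable M (\<lambda>\<omega>. (Z b \<omega> - Z c \<omega>)\<^sup>2)" "integrable M (\<lambda>\<omega>. (Z a \<omega> - Z d \<omega>)\<^sup>2)"
     "integrable M (\<lambda>\<omega>. (Z b \<omega> - Z d \<omega>)\<^sup>2)" "integrable M (\<lambda>\<omega>. (Z a \<omega> - Z c \<omega>)\<^sup>2)"
    using Z_diff by blast+
  have v1: "(\<integral>\<omega>. (Z b \<omega> - Z c \<omega>)\<^sup>2 \<partial>M) = A.s2 * \<bar>b - c\<bar>" "(\<integral>\<omega>. (Z a \<omega> - Z d \<omega>)\<^sup>2 \<partial>M) = A.s2 * \<bar>a - d\<bar>"
     "(\<integral>\<omega>. (Z b \<omega> - Z d \<omega>)\<^sup>2 \<partial>M) = A.s2 * \<bar>b - d\<bar>" "(\<integral>\<omega>. (Z a \<omega> - Z c \<omega>)\<^sup>2 \<partial>M) = A.s2 * \<bar>a - c\<bar>"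
    using Z_diff by blast+
  show ?thesis unfolding p using i1 v1
    by (simp add: Bochner_Integration.integral_diff Bochner_Integration.integral_add integrable_diff integrable_add algebra_simps)
qed

lemma Z_ae: "AE \<omega> in M. two_sided L1 L2 t \<omega> = Z t \<omega>"
proof (cases "0 \<le> t")
  case True
  show ?thesis by (rule eventually_mono[OF P1.L0]) (use True in \<open>simp add: two_sided_def Z_def\<close>)
next
  case False
  have "AE \<omega> in M. Lim (at_left (- t)) (\<lambda>u. L2 u \<omega>) = L2 (- t) \<omega>"
    by (rule B.left_lim) (use False in simp)
  then show ?thesis
    by (rule eventually_mono[OF eventually_conj[OF P2.L0]]) (use False in \<open>simp add: two_sided_def Z_def\<close>)
qed

definition "kap a b c d = (\<bar>b - c\<bar> + \<bar>a - d\<bar> - \<bar>b - d\<bar> - \<bar>a - c\<bar>) / (2::real)"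

lemma iso:
  fixes I :: "'i set"
  assumes fin: "finite I" and uv: "\<And>i. i \<in> I \<Longrightarrow> u i \<le> v i"
  shows "integrable M (\<lambda>\<omega>. (\<Sum>i\<in>I. c i * (Z (v i) \<omega> - Z (u i) \<omega>))\<^sup>2)"
    "integrable lborel (\<lambda>x. (\<Sum>i\<in>I. c i * indicator {u i<..v i} x)\<^sup>2 :: real)"
    "(\<integral>\<omega>. (\<Sum>i\<in>I. c i * (Z (v i) \<omega> - Z (u i) \<omega>))\<^sup>2 \<partial>M) =
       A.s2 * (\<integral>x. (\<Sum>i\<in>I. c i * indicator {u i<..v i} x)\<^sup>2 \<partial>lborel)"
proof -
  have e1: "(\<lambda>\<omega>. (\<Sum>i\<in>I. c i * (Z (v i) \<omega> - Z (u i) \<omega>))\<^sup>2) =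
    (\<lambda>\<omega>. \<Sum>i\<in>I. \<Sum>j\<in>I. (c i * c j) * ((Z (v i) \<omega> - Z (u i) \<omega>) * (Z (v j) \<omega> - Z (u j) \<omega>)))"
    by (simp add: power2_eq_square sum_product mult_ac)
  have e2: "(\<lambda>x. (\<Sum>i\<in>I. c i * indicator {u i<..v i} x)\<^sup>2 :: real) =
    (\<lambda>x. \<Sum>i\<in>I. \<Sum>j\<in>I. (c i * c j) * (indicator {u i<..v i} x * indicator {u j<..v j} x))"
    by (simp add: power2_eq_square sum_product mult_ac)
  have cM: "\<And>i j. integrable M (\<lambda>\<omega>. (c i * c j) * ((Z (v i) \<omega> - Z (u i) \<omega>) * (Z (v j) \<omega> - Z (u j) \<omega>))) \<and>
     (\<integral>\<omega>. (c i * c j) * ((Z (v i) \<omega> - Z (u i) \<omega>) * (Z (v j) \<omega> - Z (u j) \<omega>)) \<partial>M) = (c i * c j) * (A.s2 * kap (u i) (v i) (u j) (v j))"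
    using Z_cov unfolding kap_def by simp
  have cL: "\<And>i j. i \<in> I \<Longrightarrow> j \<in> I \<Longrightarrow> integrable lborel (\<lambda>x. (c i * c j) * (indicator {u i<..v i} x * indicator {u j<..v j} x) :: real) \<and>
     (\<integral>x. (c i * c j) * (indicator {u i<..v i} x * indicator {u j<..v j} x) \<partial>lborel :: real) = (c i * c j) * kap (u i) (v i) (u j) (v j)"
    using ind_ov uv unfolding kap_def by simp
  have cL': "\<And>i j. integrable lborel (\<lambda>x. (c i * c j) * (indicator {u i<..v i} x * indicator {u j<..v j} x) :: real)"
    by (intro integrable_mult_right) (auto simp: indicator_inter_arith[symmetric] ioc_int)
  show "integrable M (\<lambda>\<omega>. (\<Sum>i\<in>I. c i * (Z (v i) \<omega> - Z (u i) \<omega>))\<^sup>2)"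
    unfolding e1 using cM by (intro Bochner_Integration.integrable_sum) auto
  show "integrable lborel (\<lambda>x. (\<Sum>i\<in>I. c i * indicator {u i<..v i} x)\<^sup>2 :: real)"
    unfolding e2 using cL by (intro Bochner_Integration.integrable_sum) auto
  have "(\<integral>\<omega>. (\<Sum>i\<in>I. c i * (Z (v i) \<omega> - Z (u i) \<omega>))\<^sup>2 \<partial>M) = (\<Sum>i\<in>I. \<Sum>j\<in>I. (c i * c j) * (A.s2 * kap (u i) (v i) (u j) (v j)))"
    unfolding e1 by (subst int_dsum[OF fin], rule conjunct1[OF cM], intro sum.cong refl, rule conjunct2[OF cM])
  also have "\<dots> = A.s2 * (\<Sum>i\<in>I. \<Sum>j\<in>I. (c i * c j) * kap (u i) (v i) (u j) (v j))"
    by (simp add: sum_distrib_left mult_ac)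
  also have "(\<Sum>i\<in>I. \<Sum>j\<in>I. (c i * c j) * kap (u i) (v i) (u j) (v j)) = (\<integral>x. (\<Sum>i\<in>I. c i * indicator {u i<..v i} x)\<^sup>2 \<partial>lborel)"
  proof -
    have "(\<integral>x. (\<Sum>i\<in>I. \<Sum>j\<in>I. (c i * c j) * (indicator {u i<..v i} x * indicator {u j<..v j} x)) \<partial>lborel :: real)
      = (\<Sum>i\<in>I. \<Sum>j\<in>I. (\<integral>x. (c i * c j) * (indicator {u i<..v i} x * indicator {u j<..v j} x) \<partial>lborel))"
      by (rule int_dsum[OF fin cL'])
    also have "\<dots> = (\<Sum>i\<in>I. \<Sum>j\<in>I. (c i * c j) * kap (u i) (v i) (u j) (v j))"
      by (intro sum.cong refl) (use cL in auto)
    finally show ?thesis unfolding e2 by simp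
  qed
  finally show "(\<integral>\<omega>. (\<Sum>i\<in>I. c i * (Z (v i) \<omega> - Z (u i) \<omega>))\<^sup>2 \<partial>M) =
       A.s2 * (\<integral>x. (\<Sum>i\<in>I. c i * indicator {u i<..v i} x)\<^sup>2 \<partial>lborel)" .
qed

lemma li_Z:
  assumes "levy_integral M (two_sided L1 L2) f X"
  obtains N A S where "X \<in> borel_measurable M"
    "\<And>k i. i < N k \<Longrightarrow> S k i < S k (Suc i)"
    "\<And>k. integrable lborel (\<lambda>x. (step_fn (N k) (A k) (S k) x - f x)\<^sup>2)"
    "(\<lambda>k. LINT x|lborel. (step_fn (N k) (A k) (S k) x - f x)\<^sup>2) \<longlonglongrightarrow> 0"
    "\<And>k. integrable M (\<lambda>\<omega>. (step_int Z (N k) (A k) (S k) \<omega> - X \<omega>)\<^sup>2)"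
    "(\<lambda>k. LINT \<omega>|M. (step_int Z (N k) (A k) (S k) \<omega> - X \<omega>)\<^sup>2) \<longlonglongrightarrow> 0"
proof -
  from assms obtain N A S where X[measurable]: "X \<in> borel_measurable M" and
    h1: "\<forall>k. \<forall>i<N k. S k i < S k (Suc i)" and
    h2: "\<forall>k. integrable lborel (\<lambda>x. (step_fn (N k) (A k) (S k) x - f x)\<^sup>2)" and
    h3: "(\<lambda>k. LINT x|lborel. (step_fn (N k) (A k) (S k) x - f x)\<^sup>2) \<longlonglongrightarrow> 0" and
    h4: "\<forall>k. integrable M (\<lambda>\<omega>. (step_int (two_sided L1 L2) (N k) (A k) (S k) \<omega> - X \<omega>)\<^sup>2)" and
    h5: "(\<lambda>k. LINT \<omega>|M. (step_int (two_sided L1 L2) (N k) (A k) (S k) \<omega> - X \<omega>)\<^sup>2) \<longlonglongrightarrow> 0"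
    unfolding levy_integral_def by blast
  have ae: "AE \<omega> in M. (step_int (two_sided L1 L2) (N k) (A k) (S k) \<omega> - X \<omega>)\<^sup>2 =
      (step_int Z (N k) (A k) (S k) \<omega> - X \<omega>)\<^sup>2" for k
  proof -
    have "AE \<omega> in M. \<forall>t\<in>S k ` {..N k}. two_sided L1 L2 t \<omega> = Z t \<omega>"
      by (rule eventually_ball_finite) (auto intro: Z_ae)
    then show ?thesis
    proof (rule eventually_mono)
      fix \<omega> assume a: "\<forall>t\<in>S k ` {..N k}. two_sided L1 L2 t \<omega> = Z t \<omega>"
      have "step_int (two_sided L1 L2) (N k) (A k) (S k) \<omega> = step_int Z (N k) (A k) (S k) \<omega>"
        unfolding step_int_def using a by (intro sum.cong refl) auto
      then show "(step_int (two_sided L1 L2) (N k) (A k) (S k) \<omega> - X \<omega>)\<^sup>2 =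
      (step_int Z (N k) (A k) (S k) \<omega> - X \<omega>)\<^sup>2" by simp
    qed
  qed
  have mZ: "(\<lambda>\<omega>. (step_int Z (N k) (A k) (S k) \<omega> - X \<omega>)\<^sup>2) \<in> borel_measurable M" for k
    unfolding step_int_def by measurable
  have i5: "integrable M (\<lambda>\<omega>. (step_int Z (N k) (A k) (S k) \<omega> - X \<omega>)\<^sup>2)" for k
    by (rule integrable_cong_AE_imp[OF h4[rule_format] mZ ae])
  have e5: "(LINT \<omega>|M. (step_int (two_sided L1 L2) (N k) (A k) (S k) \<omega> - X \<omega>)\<^sup>2) =
      (LINT \<omega>|M. (step_int Z (N k) (A k) (S k) \<omega> - X \<omega>)\<^sup>2)" for k
    by (rule integral_cong_AE[OF borel_measurable_integrable[OF h4[rule_format]] mZ ae])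
  show ?thesis
    by (rule that[of N S A]) (use X h1 h2 h3 i5 h5 e5 in auto)
qed

lemma step_diff:
  assumes s1: "\<And>i. i < n \<Longrightarrow> s i < s (Suc i)" and s2: "\<And>i. i < n' \<Longrightarrow> s' i < s' (Suc i)"
  shows "integrable M (\<lambda>\<omega>. (step_int Z n a s \<omega> - step_int Z n' a' s' \<omega>)\<^sup>2)"
    "integrable lborel (\<lambda>x. (step_fn n a s x - step_fn n' a' s' x)\<^sup>2)"
    "(\<integral>\<omega>. (step_int Z n a s \<omega> - step_int Z n' a' s' \<omega>)\<^sup>2 \<partial>M) =
      A.s2 * (\<integral>x. (step_fn n a s x - step_fn n' a' s' x)\<^sup>2 \<partial>lborel)"
proof -
  define I where "I = {..<n} <+> {..<n'}"
  define c where "c = case_sum a (\<lambda>i. - a' i)"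
  define u where "u = case_sum s s'"
  define v where "v = case_sum (\<lambda>i. s (Suc i)) (\<lambda>i. s' (Suc i))"
  have fin: "finite I" unfolding I_def by simp
  have uv: "\<And>i. i \<in> I \<Longrightarrow> u i \<le> v i" unfolding I_def u_def v_def using s1 s2
    by (auto intro: less_imp_le)
  have e1: "step_int Z n a s \<omega> - step_int Z n' a' s' \<omega> = (\<Sum>i\<in>I. c i * (Z (v i) \<omega> - Z (u i) \<omega>))" for \<omega>
    unfolding I_def step_int_def c_def u_def v_def by (simp add: sum.Plus sum_negf)
  have e2: "step_fn n a s x - step_fn n' a' s' x = (\<Sum>i\<in>I. c i * indicator {u i<..v i} x)" for x
    unfolding I_def step_fn_def c_def u_def v_def
    by (simp only: sum.Plus[OF finite_lessThan finite_lessThan] comp_def sum.case mult_minus_left sum_negf diff_conv_add_uminus)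
  show "integrable M (\<lambda>\<omega>. (step_int Z n a s \<omega> - step_int Z n' a' s' \<omega>)\<^sup>2)"
    "integrable lborel (\<lambda>x. (step_fn n a s x - step_fn n' a' s' x)\<^sup>2)"
    "(\<integral>\<omega>. (step_int Z n a s \<omega> - step_int Z n' a' s' \<omega>)\<^sup>2 \<partial>M) =
      A.s2 * (\<integral>x. (step_fn n a s x - step_fn n' a' s' x)\<^sup>2 \<partial>lborel)"
    unfolding e1 e2 using iso[OF fin uv] by auto
qed

lemma step_fn_meas[measurable]: "step_fn n a s \<in> borel_measurable borel"
  unfolding step_fn_def by measurable

lemma li_bound:
  assumes li1: "levy_integral M (two_sided L1 L2) f X" and li2: "levy_integral M (two_sided L1 L2) g Y"
    and fm[measurable]: "f \<in> borel_measurable borel" and gm[measurable]: "g \<in> borel_measurable borel"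
  shows "integrable M (\<lambda>\<omega>. (X \<omega> - Y \<omega>)\<^sup>2)"
    "(\<integral>\<omega>. (X \<omega> - Y \<omega>)\<^sup>2 \<partial>M) \<le> 9 * A.s2 * (\<integral>x. (f x - g x)\<^sup>2 \<partial>lborel)"
proof -
  obtain N S A where X[measurable]: "X \<in> borel_measurable M" and
    h1: "\<And>k i. i < N k \<Longrightarrow> S k i < S k (Suc i)" and
    h2: "\<And>k. integrable lborel (\<lambda>x. (step_fn (N k) (A k) (S k) x - f x)\<^sup>2)" and
    h3: "(\<lambda>k. LINT x|lborel. (step_fn (N k) (A k) (S k) x - f x)\<^sup>2) \<longlonglongrightarrow> 0" and
    h4: "\<And>k. integrable M (\<lambda>\<omega>. (step_int Z (N k) (A k) (S k) \<omega> - X \<omega>)\<^sup>2)" and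
    h5: "(\<lambda>k. LINT \<omega>|M. (step_int Z (N k) (A k) (S k) \<omega> - X \<omega>)\<^sup>2) \<longlonglongrightarrow> 0"
    by (rule li_Z[OF li1]) (rule that, assumption+)
  obtain N' S' A' where Y[measurable]: "Y \<in> borel_measurable M" and
    g1: "\<And>k i. i < N' k \<Longrightarrow> S' k i < S' k (Suc i)" and
    g2: "\<And>k. integrable lborel (\<lambda>x. (step_fn (N' k) (A' k) (S' k) x - g x)\<^sup>2)" and
    g3: "(\<lambda>k. LINT x|lborel. (step_fn (N' k) (A' k) (S' k) x - g x)\<^sup>2) \<longlonglongrightarrow> 0" and
    g4: "\<And>k. integrable M (\<lambda>\<omega>. (step_int Z (N' k) (A' k) (S' k) \<omega> - Y \<omega>)\<^sup>2)" and
    g5: "(\<lambda>k. LINT \<omega>|M. (step_int Z (N' k) (A' k) (S' k) \<omega> - Y \<omega>)\<^sup>2) \<longlonglongrightarrow> 0"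
    by (rule li_Z[OF li2]) (rule that, assumption+)
  define sf where "sf k = step_fn (N k) (A k) (S k)" for k
  define sg where "sg k = step_fn (N' k) (A' k) (S' k)" for k
  define SI where "SI k = step_int Z (N k) (A k) (S k)" for k
  define SJ where "SJ k = step_int Z (N' k) (A' k) (S' k)" for k
  have [measurable]: "sf k \<in> borel_measurable borel" "sg k \<in> borel_measurable borel" for k
    unfolding sf_def sg_def by auto
  have [measurable]: "SI k \<in> borel_measurable M" "SJ k \<in> borel_measurable M" for k
    unfolding SI_def SJ_def step_int_def by auto
  have sd: "integrable M (\<lambda>\<omega>. (SI k \<omega> - SJ k \<omega>)\<^sup>2)" "integrable lborel (\<lambda>x. (sf k x - sg k x)\<^sup>2)"
    "(\<integral>\<omega>. (SI k \<omega> - SJ k \<omega>)\<^sup>2 \<partial>M) = A.s2 * (\<integral>x. (sf k x - sg k x)\<^sup>2 \<partial>lborel)" for k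
    unfolding SI_def SJ_def sf_def sg_def using step_diff[of "N k" "S k" "N' k" "S' k" "A k" "A' k"] h1 g1 by auto
  have c: "\<And>F G. (\<lambda>x. (F x - G x)\<^sup>2 :: real) = (\<lambda>x. (G x - F x)\<^sup>2)" by (auto simp: power2_commute)
  have ff: "integrable lborel (\<lambda>x. (f x - sf k x)\<^sup>2)" for k using h2[of k] unfolding sf_def by (subst c) simp
  have gg: "integrable lborel (\<lambda>x. (sg k x - g x)\<^sup>2)" for k using g2[of k] unfolding sg_def by simp
  have XX: "integrable M (\<lambda>\<omega>. (X \<omega> - SI k \<omega>)\<^sup>2)" for k using h4[of k] unfolding SI_def by (subst c) simp
  have YY: "integrable M (\<lambda>\<omega>. (SJ k \<omega> - Y \<omega>)\<^sup>2)" for k using g4[of k] unfolding SJ_def by simp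
  have fg: "integrable lborel (\<lambda>x. (f x - g x)\<^sup>2)"
    using sq3_int(1)[of "\<lambda>x. f x - sf 0 x" lborel "\<lambda>x. sf 0 x - sg 0 x" "\<lambda>x. sg 0 x - g x", OF _ _ _ ff sd(2) gg]
    by simp
  have bL: "(\<integral>x. (sf k x - sg k x)\<^sup>2 \<partial>lborel) \<le>
     3 * ((\<integral>x. (sf k x - f x)\<^sup>2 \<partial>lborel) + (\<integral>x. (f x - g x)\<^sup>2 \<partial>lborel) + (\<integral>x. (g x - sg k x)\<^sup>2 \<partial>lborel))" for k
    using sq3_int(2)[of "\<lambda>x. sf k x - f x" lborel "\<lambda>x. f x - g x" "\<lambda>x. g x - sg k x", OF _ _ _ _ fg]
      h2[of k] g2[of k] unfolding sf_def sg_def by (simp add: c[of g])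
  show iXY: "integrable M (\<lambda>\<omega>. (X \<omega> - Y \<omega>)\<^sup>2)"
    using sq3_int(1)[of "\<lambda>\<omega>. X \<omega> - SI 0 \<omega>" M "\<lambda>\<omega>. SI 0 \<omega> - SJ 0 \<omega>" "\<lambda>\<omega>. SJ 0 \<omega> - Y \<omega>", OF _ _ _ XX sd(1) YY]
    by simp
  have bM: "(\<integral>\<omega>. (X \<omega> - Y \<omega>)\<^sup>2 \<partial>M) \<le>
     3 * ((\<integral>\<omega>. (SI k \<omega> - X \<omega>)\<^sup>2 \<partial>M) + (\<integral>\<omega>. (SI k \<omega> - SJ k \<omega>)\<^sup>2 \<partial>M) + (\<integral>\<omega>. (SJ k \<omega> - Y \<omega>)\<^sup>2 \<partial>M))" for k
    using sq3_int(2)[of "\<lambda>\<omega>. X \<omega> - SI k \<omega>" M "\<lambda>\<omega>. SI k \<omega> - SJ k \<omega>" "\<lambda>\<omega>. SJ k \<omega> - Y \<omega>", OF _ _ _ XX sd(1) YY]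
    by (simp add: c[of X])
  define Fv where "Fv = (\<integral>x. (f x - g x)\<^sup>2 \<partial>lborel)"
  define R where "R k = 3 * ((\<integral>\<omega>. (SI k \<omega> - X \<omega>)\<^sup>2 \<partial>M) + A.s2 * (3 * ((\<integral>x. (sf k x - f x)\<^sup>2 \<partial>lborel) + Fv + (\<integral>x. (g x - sg k x)\<^sup>2 \<partial>lborel))) + (\<integral>\<omega>. (SJ k \<omega> - Y \<omega>)\<^sup>2 \<partial>M))" for k
  have le: "(\<integral>\<omega>. (X \<omega> - Y \<omega>)\<^sup>2 \<partial>M) \<le> R k" for k
  proof -
    have "A.s2 * (\<integral>x. (sf k x - sg k x)\<^sup>2 \<partial>lborel) \<le> A.s2 * (3 * ((\<integral>x. (sf k x - f x)\<^sup>2 \<partial>lborel) + Fv + (\<integral>x. (g x - sg k x)\<^sup>2 \<partial>lborel)))"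
      using bL[of k] A.s2_nonneg unfolding Fv_def by (intro mult_left_mono) auto
    then have a_le: "(\<integral>\<omega>. (SI k \<omega> - SJ k \<omega>)\<^sup>2 \<partial>M) \<le> A.s2 * (3 * ((\<integral>x. (sf k x - f x)\<^sup>2 \<partial>lborel) + Fv + (\<integral>x. (g x - sg k x)\<^sup>2 \<partial>lborel)))"
      using sd(3)[of k] by simp
    show ?thesis unfolding R_def by (rule order_trans[OF bM[of k]]) (use a_le in simp)
  qed
  have g3': "(\<lambda>k. LINT x|lborel. (g x - sg k x)\<^sup>2) \<longlonglongrightarrow> 0" using g3 unfolding sg_def by (subst c) simp
  have "R \<longlonglongrightarrow> 3 * (0 + A.s2 * (3 * (0 + Fv + 0)) + 0)"
    unfolding R_def using h5 h3 g3' g5 unfolding SI_def SJ_def sf_def sg_def by (intro tendsto_intros) auto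
  then have "(\<integral>\<omega>. (X \<omega> - Y \<omega>)\<^sup>2 \<partial>M) \<le> 3 * (0 + A.s2 * (3 * (0 + Fv + 0)) + 0)"
    by (rule LIMSEQ_le_const) (use le in auto)
  then show "(\<integral>\<omega>. (X \<omega> - Y \<omega>)\<^sup>2 \<partial>M) \<le> 9 * A.s2 * (\<integral>x. (f x - g x)\<^sup>2 \<partial>lborel)"
    unfolding Fv_def by simp
qed

end



lemma fH_meas[measurable]: "f_H H r \<in> borel_measurable borel"
  unfolding f_H_def by measurable

lemma max_powr_scale:
  fixes h y \<alpha> :: real
  assumes "0 < h"
  shows "max (h * y) 0 powr \<alpha> = h powr \<alpha> * max y 0 powr \<alpha>"
proof (cases "0 \<le> y")
  case True
  then have "max (h * y) 0 = h * y" "max y 0 = y" using assms by auto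
  then show ?thesis using assms True by (simp add: powr_mult)
next
  case False
  then have "h * y < 0" using assms by (simp add: mult_pos_neg)
  then have "max (h * y) 0 = 0" "max y 0 = 0" using False by auto
  then show ?thesis by simp
qed

lemma fH_scale:
  assumes "b < a"
  shows "(\<integral>x. (f_H H a x - f_H H b x)\<^sup>2 \<partial>lborel) = (a - b) powr (2 * H) * (\<integral>x. (f_H H 1 x - f_H H 0 x)\<^sup>2 \<partial>lborel)"
proof -
  define h where "h = a - b"
  have h: "0 < h" using assms unfolding h_def by simp
  define \<alpha> where "\<alpha> = H - 1/2"
  have pt: "(f_H H a (b + h * x) - f_H H b (b + h * x))\<^sup>2 = h powr (2 * \<alpha>) * (f_H H 1 x - f_H H 0 x)\<^sup>2" for x
  proof -
    have e1: "a - (b + h * x) = h * (1 - x)" "b - (b + h * x) = h * (- x)" unfolding h_def by (auto simp: algebra_simps)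
    have "f_H H a (b + h * x) - f_H H b (b + h * x) = C_H H * (max (h * (1 - x)) 0 powr \<alpha> - max (h * (- x)) 0 powr \<alpha>)"
      unfolding f_H_def \<alpha>_def using e1 by (simp add: algebra_simps)
    also have "\<dots> = h powr \<alpha> * (f_H H 1 x - f_H H 0 x)"
      unfolding f_H_def \<alpha>_def max_powr_scale[OF h] by (simp add: algebra_simps)
    finally have "(f_H H a (b + h * x) - f_H H b (b + h * x))\<^sup>2 = (h powr \<alpha>)\<^sup>2 * (f_H H 1 x - f_H H 0 x)\<^sup>2"
      by (simp add: power_mult_distrib)
    also have "(h powr \<alpha>)\<^sup>2 = h powr (2 * \<alpha>)" using h by (simp add: powr_powr[symmetric] power2_eq_square powr_add[symmetric])
    finally show ?thesis .
  qed
  have "(\<integral>x. (f_H H a x - f_H H b x)\<^sup>2 \<partial>lborel) = \<bar>h\<bar> *\<^sub>R (\<integral>x. (f_H H a (b + h * x) - f_H H b (b + h * x))\<^sup>2 \<partial>lborel)"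
    by (rule lborel_integral_real_affine) (use h in simp)
  also have "\<dots> = h * (h powr (2 * \<alpha>) * (\<integral>x. (f_H H 1 x - f_H H 0 x)\<^sup>2 \<partial>lborel))"
    using h by (simp add: pt)
  finally have r: "(\<integral>x. (f_H H a x - f_H H b x)\<^sup>2 \<partial>lborel) = h * (h powr (2 * \<alpha>) * (\<integral>x. (f_H H 1 x - f_H H 0 x)\<^sup>2 \<partial>lborel))" .
  have hp: "h * h powr (2 * \<alpha>) = h powr (2 * H)"
  proof -
    have "h * h powr (2 * \<alpha>) = h powr 1 * h powr (2 * \<alpha>)" using h by simp
    also have "\<dots> = h powr (1 + 2 * \<alpha>)" using h by (simp add: powr_add)
    finally show ?thesis unfolding \<alpha>_def by (simp add: algebra_simps)
  qed
  show ?thesis unfolding r h_def[symmetric] hp[symmetric] by (simp add: mult.assoc)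
qed




context two
begin

lemma incr_X:
  assumes li: "\<forall>r. levy_integral M (two_sided L1 L2) (f_H H r) (X r)" and ba: "b < a"
  shows "integrable M (\<lambda>\<omega>. (X a \<omega> - X b \<omega>)\<^sup>2)"
    "(\<integral>\<omega>. (X a \<omega> - X b \<omega>)\<^sup>2 \<partial>M) \<le> 9 * A.s2 * (\<integral>x. (f_H H 1 x - f_H H 0 x)\<^sup>2 \<partial>lborel) * (a - b) powr (2 * H)"
proof -
  have l1: "levy_integral M (two_sided L1 L2) (f_H H a) (X a)" and l2: "levy_integral M (two_sided L1 L2) (f_H H b) (X b)"
    using li by auto
  note lb = li_bound[OF l1 l2 fH_meas fH_meas]
  show "integrable M (\<lambda>\<omega>. (X a \<omega> - X b \<omega>)\<^sup>2)" by (rule lb(1))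
  show "(\<integral>\<omega>. (X a \<omega> - X b \<omega>)\<^sup>2 \<partial>M) \<le> 9 * A.s2 * (\<integral>x. (f_H H 1 x - f_H H 0 x)\<^sup>2 \<partial>lborel) * (a - b) powr (2 * H)"
    using lb(2) unfolding fH_scale[OF ba] by (simp add: mult_ac)
qed

end

lemma pw_identity:
  fixes d H :: real
  assumes "0 < d"
  shows "2 ^ n * ((d / 2 ^ n) powr (2 * H)) = d powr (2 * H) * (2 powr (1 - 2 * H)) ^ n"
proof -
  have p: "(2::real) ^ n = 2 powr real n" by (simp add: powr_realpow)
  have "(d / 2 ^ n) powr (2 * H) = d powr (2 * H) / (2 powr real n) powr (2 * H)"
    using assms by (simp add: powr_divide p)
  also have "(2 powr real n) powr (2 * H) = 2 powr (real n * (2 * H))" by (simp add: powr_powr)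
  finally have "2 ^ n * ((d / 2 ^ n) powr (2 * H)) = d powr (2 * H) * (2 powr real n / 2 powr (real n * (2 * H)))"
    unfolding p by simp
  also have "2 powr real n / 2 powr (real n * (2 * H)) = 2 powr (real n * (1 - 2 * H))"
    by (simp add: powr_diff[symmetric] algebra_simps)
  also have "\<dots> = (2 powr (1 - 2 * H)) ^ n"
  proof -
    have "(2 powr (1 - 2 * H)) ^ n = (2 powr (1 - 2 * H)) powr real n" by (rule powr_realpow[symmetric]) simp
    also have "\<dots> = 2 powr ((1 - 2 * H) * real n)" by (rule powr_powr)
    finally show ?thesis by (simp add: mult.commute)
  qed
  finally show ?thesis .
qed

theorem mainTheorem7:
  fixes M :: "'a measure" and L1 L2 X :: "real \<Rightarrow> 'a \<Rightarrow> real" and H s t :: real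
  assumes "prob_space M"
    and "1/2 < H" and "H < 1"
    and "levy_process M L1" and "levy_process M L2"
    and "iid_processes M L1 L2"
    and "no_gaussian_component M (L1 1)"
    and "integrable M (\<lambda>\<omega>. (L1 1 \<omega>)\<^sup>2)"
    and "prob_space.expectation M (L1 1) = 0"
    and "\<forall>r. levy_integral M (two_sided L1 L2) (f_H H r) (X r)"
    and "s < t"
  shows "AE \<omega> in M. (\<lambda>n. \<Sum>j\<in>{1..(2::nat)^n}.
            (X (s + real j / 2^n * (t - s)) \<omega> - X (s + (real j - 1) / 2^n * (t - s)) \<omega>)\<^sup>2)
          \<longlonglongrightarrow> 0"
proof -
  interpret two M L1 L2
    by unfold_locales (use assms(4,5,6,8,9) in auto)
  note li = assms(10)
  define K where "K = (\<integral>x. (f_H H 1 x - f_H H 0 x)\<^sup>2 \<partial>lborel)"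
  define c where "c = 9 * A.s2 * K"
  have K0: "0 \<le> K" unfolding K_def by (rule integral_nonneg_AE) auto
  have c0: "0 \<le> c" unfolding c_def using K0 A.s2_nonneg by simp
  define d where "d = t - s"
  have d0: "0 < d" using assms(11) unfolding d_def by simp
  define r where "r = (2::real) powr (1 - 2 * H)"
  have r0: "0 < r" unfolding r_def by simp
  have r1: "r < 1" unfolding r_def by (rule powr_less_one) (use assms(2) in auto)
  define Q where "Q n \<omega> = (\<Sum>j\<in>{1..(2::nat)^n}.
            (X (s + real j / 2^n * (t - s)) \<omega> - X (s + (real j - 1) / 2^n * (t - s)) \<omega>)\<^sup>2)" for n \<omega>
  have Xm[measurable]: "X u \<in> borel_measurable M" for u
    using li unfolding levy_integral_def by blast
  have Qm[measurable]: "Q n \<in> borel_measurable M" for n unfolding Q_def by measurable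
  have Qnn: "0 \<le> Q n \<omega>" for n \<omega> unfolding Q_def by (intro sum_nonneg) auto
  have tm: "integrable M (\<lambda>\<omega>. (X (s + real j / 2^n * (t - s)) \<omega> - X (s + (real j - 1) / 2^n * (t - s)) \<omega>)\<^sup>2) \<and>
     (\<integral>\<omega>. (X (s + real j / 2^n * (t - s)) \<omega> - X (s + (real j - 1) / 2^n * (t - s)) \<omega>)\<^sup>2 \<partial>M) \<le> c * (d / 2 ^ n) powr (2 * H)"
    for n j
  proof -
    have e: "(s + real j / 2^n * (t - s)) - (s + (real j - 1) / 2^n * (t - s)) = d / 2 ^ n"
      unfolding d_def by (simp add: field_simps)
    have lt: "s + (real j - 1) / 2^n * (t - s) < s + real j / 2^n * (t - s)"
    proof -
      have "0 < d / 2 ^ n" using d0 by simp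
      then show ?thesis using e by linarith
    qed
    show ?thesis using incr_X[OF li lt] unfolding e c_def K_def by simp
  qed
  have Qi: "integrable M (Q n)" for n
    unfolding Q_def using tm by (intro Bochner_Integration.integrable_sum) auto
  have EQ: "(\<integral>\<omega>. Q n \<omega> \<partial>M) \<le> c * d powr (2 * H) * r ^ n" for n
  proof -
    have "(\<integral>\<omega>. Q n \<omega> \<partial>M) = (\<Sum>j\<in>{1..(2::nat)^n}. (\<integral>\<omega>. (X (s + real j / 2^n * (t - s)) \<omega> - X (s + (real j - 1) / 2^n * (t - s)) \<omega>)\<^sup>2 \<partial>M))"
      unfolding Q_def using tm by (intro Bochner_Integration.integral_sum) auto
    also have "\<dots> \<le> (\<Sum>j\<in>{1..(2::nat)^n}. c * (d / 2 ^ n) powr (2 * H))"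
      using tm by (intro sum_mono) auto
    also have "\<dots> = 2 ^ n * (c * (d / 2 ^ n) powr (2 * H))" by simp
    also have "\<dots> = c * (2 ^ n * (d / 2 ^ n) powr (2 * H))" by simp
    also have "\<dots> = c * d powr (2 * H) * r ^ n" unfolding pw_identity[OF d0] r_def by simp
    finally show ?thesis .
  qed
  have nnQ: "(\<integral>\<^sup>+\<omega>. ennreal (Q n \<omega>) \<partial>M) \<le> ennreal (c * d powr (2 * H) * r ^ n)" for n
    using EQ[of n] Qi[of n] Qnn by (subst nn_integral_eq_integral) (auto intro: ennreal_leI)
  have sg: "summable (\<lambda>n. c * d powr (2 * H) * r ^ n)"
    by (intro summable_mult summable_geometric) (use r0 r1 in simp)
  have "(\<integral>\<^sup>+\<omega>. (\<Sum>n. ennreal (Q n \<omega>)) \<partial>M) = (\<Sum>n. \<integral>\<^sup>+\<omega>. ennreal (Q n \<omega>) \<partial>M)"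
    by (rule nn_integral_suminf) simp
  also have "\<dots> \<le> (\<Sum>n. ennreal (c * d powr (2 * H) * r ^ n))"
    by (intro suminf_le nnQ summableI)
  also have "\<dots> = ennreal (\<Sum>n. c * d powr (2 * H) * r ^ n)"
    by (rule suminf_ennreal2[OF _ sg]) (use c0 r0 in simp)
  finally have fin: "(\<integral>\<^sup>+\<omega>. (\<Sum>n. ennreal (Q n \<omega>)) \<partial>M) \<noteq> \<infinity>"
    by (auto simp: top_unique)
  have "AE \<omega> in M. (\<Sum>n. ennreal (Q n \<omega>)) \<noteq> \<infinity>"
    by (rule nn_integral_PInf_AE[OF _ fin]) simp
  then show ?thesis
  proof (rule eventually_mono)
    fix \<omega> assume "(\<Sum>n. ennreal (Q n \<omega>)) \<noteq> \<infinity>"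
    then have "summable (\<lambda>n. Q n \<omega>)" by (intro summable_suminf_not_top Qnn) simp
    then have "(\<lambda>n. Q n \<omega>) \<longlonglongrightarrow> 0" by (rule summable_LIMSEQ_zero)
    then show "(\<lambda>n. \<Sum>j\<in>{1..(2::nat)^n}.
            (X (s + real j / 2^n * (t - s)) \<omega> - X (s + (real j - 1) / 2^n * (t - s)) \<omega>)\<^sup>2) \<longlonglongrightarrow> 0"
      unfolding Q_def .
  qed
qed


end
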